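(* Let $\sigma\colon\Sigma\to\Sigma$ be a topologically mixing two-sided subshift of finite type with a Gibbs measure $\mu$ of a H\"older potential, $0<\theta<1$, $f\colon\Sigma\to\mathbb R$ Lipschitz w.r.t. $d_\theta$ with $\int f\,d\mu=0$, and $F(x,r)=(\sigma x,r+f(x))$. If $F$ is accessible, then $f$ is not cohomologous to zero, i.e. there is no measurable $w\colon\Sigma\to\mathbb R$ with $f=w\circ\sigma-w$ $\mu$-almost everywhere.
   Context: $d_\theta(x,y)=\theta^{\max\{j:\ x_i=y_i\ \forall|i|<j\}}$, $f_n=\sum_{i<n}f\circ\sigma^i$. $(y,s)\in W^s(x,r)$ iff $y_i=x_i$ for all sufficiently large $i$ and $s-r=\lim_n(f_n(x)-f_n(y))$; $(y,s)\in W^u(x,r)$ iff $y_i=x_i$ for all sufficiently negative $i$ and $s-r=\lim_n(f_n(\sigma^{-n}y)-f_n(\sigma^{-n}x))$; $F$ is accessible if any two points of $\Sigma\times\mathbb R$ are joined by a finite chain of points each in $W^s$ or $W^u$ of the previous one. *)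

theory Defs
  imports "HOL-Probability.Probability"
begin

type_synonym seq = "int \<Rightarrow> nat"

definition SFT :: "nat \<Rightarrow> (nat \<Rightarrow> nat \<Rightarrow> bool) \<Rightarrow> seq set" where
  "SFT k A = {x. \<forall>i. x i < k \<and> A (x i) (x (i + 1))}"

definition shift :: "seq \<Rightarrow> seq" where
  "shift x = (\<lambda>i. x (i + 1))"

definition shiftn :: "int \<Rightarrow> seq \<Rightarrow> seq" where
  "shiftn n x = (\<lambda>i. x (i + n))"

text \<open>Cylinder sets; they form a base of the d_theta topology and generate the Borel sets of Sigma.\<close>
definition cyl :: "seq set \<Rightarrow> int \<Rightarrow> int \<Rightarrow> seq \<Rightarrow> seq set" where
  "cyl S m n w = {y \<in> S. \<forall>i. m \<le> i \<and> i \<le> n \<longrightarrow> y i = w i}"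

definition cylinders :: "seq set \<Rightarrow> seq set set" where
  "cylinders S = {cyl S m n w | m n w. True}"

text \<open>Topological mixing, stated on the base of symmetric cylinders [-m,m].\<close>
definition topologically_mixing :: "seq set \<Rightarrow> bool" where
  "topologically_mixing S \<longleftrightarrow>
     (\<forall>x\<in>S. \<forall>y\<in>S. \<forall>m::int. \<exists>N::nat. \<forall>n\<ge>N.
        \<exists>z\<in>S. (\<forall>i. \<bar>i\<bar> \<le> m \<longrightarrow> z i = x i) \<and>
               (\<forall>i. \<bar>i\<bar> \<le> m \<longrightarrow> shiftn (int n) z i = y i))"

definition d_theta :: "real \<Rightarrow> seq \<Rightarrow> seq \<Rightarrow> real" where
  "d_theta \<theta> x y = (if x = y then 0
      else \<theta> ^ (GREATEST j::nat. \<forall>i::int. \<bar>i\<bar> < int j \<longrightarrow> x i = y i))"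

definition lipschitz_dtheta :: "seq set \<Rightarrow> real \<Rightarrow> (seq \<Rightarrow> real) \<Rightarrow> bool" where
  "lipschitz_dtheta S \<theta> g \<longleftrightarrow> (\<exists>C. \<forall>x\<in>S. \<forall>y\<in>S. \<bar>g x - g y\<bar> \<le> C * d_theta \<theta> x y)"

text \<open>Hoelder potential: Hoelder w.r.t. some d_theta', equivalently Lipschitz w.r.t. some d_theta'.\<close>
definition holder :: "seq set \<Rightarrow> (seq \<Rightarrow> real) \<Rightarrow> bool" where
  "holder S \<phi> \<longleftrightarrow> (\<exists>\<theta>' \<alpha> C. 0 < \<theta>' \<and> \<theta>' < 1 \<and> 0 < \<alpha> \<and> \<alpha> \<le> 1 \<and>
      (\<forall>x\<in>S. \<forall>y\<in>S. \<bar>\<phi> x - \<phi> y\<bar> \<le> C * d_theta \<theta>' x y powr \<alpha>))"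

definition birkhoff :: "(seq \<Rightarrow> real) \<Rightarrow> nat \<Rightarrow> seq \<Rightarrow> real" where
  "birkhoff g n x = (\<Sum>i<n. g ((shift ^^ i) x))"

definition gibbs_measure :: "seq set \<Rightarrow> seq measure \<Rightarrow> bool" where
  "gibbs_measure S \<mu> \<longleftrightarrow>
     prob_space \<mu> \<and> space \<mu> = S \<and> sets \<mu> = sigma_sets S (cylinders S) \<and>
     (\<forall>B\<in>sets \<mu>. shift -` B \<inter> S \<in> sets \<mu> \<and> measure \<mu> (shift -` B \<inter> S) = measure \<mu> B) \<and>
     (\<exists>\<phi> P c1 c2. holder S \<phi> \<and> 0 < c1 \<and> 0 < c2 \<and>
        (\<forall>x\<in>S. \<forall>n\<ge>1.
           c1 * exp (- real n * P + birkhoff \<phi> n x) \<le> measure \<mu> (cyl S 0 (int n - 1) x) \<and>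
           measure \<mu> (cyl S 0 (int n - 1) x) \<le> c2 * exp (- real n * P + birkhoff \<phi> n x)))"

definition Ws :: "seq set \<Rightarrow> (seq \<Rightarrow> real) \<Rightarrow> seq \<times> real \<Rightarrow> (seq \<times> real) set" where
  "Ws S f p = {(y, s). y \<in> S \<and> (\<exists>N. \<forall>i\<ge>N. y i = fst p i) \<and>
      (\<lambda>n. birkhoff f n (fst p) - birkhoff f n y) \<longlonglongrightarrow> s - snd p}"

definition Wu :: "seq set \<Rightarrow> (seq \<Rightarrow> real) \<Rightarrow> seq \<times> real \<Rightarrow> (seq \<times> real) set" where
  "Wu S f p = {(y, s). y \<in> S \<and> (\<exists>N. \<forall>i\<le>N. y i = fst p i) \<and>
      (\<lambda>n. birkhoff f n (shiftn (- int n) y) - birkhoff f n (shiftn (- int n) (fst p)))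
         \<longlonglongrightarrow> s - snd p}"

definition accessible :: "seq set \<Rightarrow> (seq \<Rightarrow> real) \<Rightarrow> bool" where
  "accessible S f \<longleftrightarrow>
     (\<forall>p\<in>S \<times> UNIV. \<forall>q\<in>S \<times> UNIV. (\<lambda>a b. b \<in> Ws S f a \<union> Wu S f a)\<^sup>*\<^sup>* p q)"

end

theory Submission
  imports Defs
begin

lemma shiftn_shiftn[simp]: "shiftn a (shiftn b x) = shiftn (a + b) x"
  by (simp add: shiftn_def add.commute add.left_commute)

lemma shiftn_0[simp]: "shiftn 0 x = x"
  by (simp add: shiftn_def)

lemma shift_eq: "shift = shiftn 1"
  by (simp add: fun_eq_iff shift_def shiftn_def)

lemma funpow_shift: "(shift ^^ i) x = shiftn (int i) x"
  by (induction i arbitrary: x) (auto simp: shift_eq add.commute)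

lemma shiftn_apply: "shiftn n x i = x (i + n)"
  by (simp add: shiftn_def)

lemma SFT_shiftn: "x \<in> SFT k A \<Longrightarrow> shiftn n x \<in> SFT k A"
  unfolding SFT_def shiftn_def
  by (auto, metis add.commute add.left_commute)

lemma birkhoff_alt: "birkhoff g n x = (\<Sum>i<n. g (shiftn (int i) x))"
  by (simp add: birkhoff_def funpow_shift)

lemma d_theta_nonneg: "0 \<le> \<theta> \<Longrightarrow> 0 \<le> d_theta \<theta> x y"
  by (simp add: d_theta_def)

lemma d_theta_le:
  assumes "0 \<le> \<theta>" "\<theta> \<le> 1" and agree: "\<forall>j. \<bar>j\<bar> < int r \<longrightarrow> x j = y j"
  shows "d_theta \<theta> x y \<le> \<theta> ^ r"
proof (cases "x = y")
  case True then show ?thesis using assms by (simp add: d_theta_def)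
next
  case False
  then obtain i0 where i0: "x i0 \<noteq> y i0" by auto
  let ?P = "\<lambda>j::nat. \<forall>i::int. \<bar>i\<bar> < int j \<longrightarrow> x i = y i"
  have bnd: "\<forall>j. ?P j \<longrightarrow> j \<le> nat \<bar>i0\<bar>"
    using i0 by (metis int_nat_eq abs_ge_zero not_le of_nat_less_iff)
  have "r \<le> (GREATEST j. ?P j)"
    by (rule Greatest_le_nat[of ?P r "nat \<bar>i0\<bar>"]) (use agree bnd in auto)
  then have "\<theta> ^ (GREATEST j. ?P j) \<le> \<theta> ^ r"
    using assms by (simp add: power_decreasing)
  then show ?thesis using False by (simp add: d_theta_def)
qed


locale skew =
  fixes k :: nat and A :: "nat \<Rightarrow> nat \<Rightarrow> bool" and \<mu> :: "seq measure"
    and \<theta> :: real and f :: "seq \<Rightarrow> real"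
  assumes mix: "topologically_mixing (SFT k A)"
    and gib: "gibbs_measure (SFT k A) \<mu>"
    and th0: "0 < \<theta>" and th1: "\<theta> < 1"
    and lip: "lipschitz_dtheta (SFT k A) \<theta> f"
begin

abbreviation "S \<equiv> SFT k A"

definition Cf where "Cf = (SOME C. C \<ge> 0 \<and> (\<forall>x\<in>S. \<forall>y\<in>S. \<bar>f x - f y\<bar> \<le> C * d_theta \<theta> x y))"

lemma Cf: "Cf \<ge> 0 \<and> (\<forall>x\<in>S. \<forall>y\<in>S. \<bar>f x - f y\<bar> \<le> Cf * d_theta \<theta> x y)"
proof -
  obtain C where C: "\<forall>x\<in>S. \<forall>y\<in>S. \<bar>f x - f y\<bar> \<le> C * d_theta \<theta> x y"
    using lip unfolding lipschitz_dtheta_def by auto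
  have "max C 0 \<ge> 0 \<and> (\<forall>x\<in>S. \<forall>y\<in>S. \<bar>f x - f y\<bar> \<le> max C 0 * d_theta \<theta> x y)"
  proof (intro conjI ballI)
    fix x y assume "x \<in> S" "y \<in> S"
    then have "\<bar>f x - f y\<bar> \<le> C * d_theta \<theta> x y" using C by auto
    also have "\<dots> \<le> max C 0 * d_theta \<theta> x y"
      using d_theta_nonneg[of \<theta> x y] th0 by (intro mult_right_mono) auto
    finally show "\<bar>f x - f y\<bar> \<le> max C 0 * d_theta \<theta> x y" .
  qed auto
  then show ?thesis unfolding Cf_def by (rule someI)
qed

lemma Cf_nonneg: "Cf \<ge> 0" using Cf by auto

lemma lip_agree:
  assumes "x \<in> S" "y \<in> S" "\<forall>j. \<bar>j\<bar> < int r \<longrightarrow> x j = y j"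
  shows "\<bar>f x - f y\<bar> \<le> Cf * \<theta> ^ r"
proof -
  have "\<bar>f x - f y\<bar> \<le> Cf * d_theta \<theta> x y" using Cf assms by auto
  also have "\<dots> \<le> Cf * \<theta> ^ r"
    using d_theta_le[of \<theta> r x y] assms th0 th1 Cf_nonneg by (intro mult_left_mono) auto
  finally show ?thesis .
qed

lemma lip_shift:
  assumes "x \<in> S" "y \<in> S" "\<forall>j. \<bar>j\<bar> < int r \<longrightarrow> x (j + i) = y (j + i)"
  shows "\<bar>f (shiftn i x) - f (shiftn i y)\<bar> \<le> Cf * \<theta> ^ r"
  using assms by (intro lip_agree) (auto simp: SFT_shiftn shiftn_apply)

lemma f_bounded: "\<exists>B. \<forall>x\<in>S. \<forall>y\<in>S. \<bar>f x - f y\<bar> \<le> B"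
  using lip_agree[of _ _ 0] by auto

lemma prob: "prob_space \<mu>" and space_mu: "space \<mu> = S"
  and sets_mu: "sets \<mu> = sigma_sets S (cylinders S)"
  and inv: "\<And>B. B \<in> sets \<mu> \<Longrightarrow> shift -` B \<inter> S \<in> sets \<mu> \<and> measure \<mu> (shift -` B \<inter> S) = measure \<mu> B"
  using gib unfolding gibbs_measure_def by auto

lemma cyl_sub: "cyl S m n w \<subseteq> S" by (auto simp: cyl_def)

lemma cylinders_sub: "cylinders S \<subseteq> Pow S" by (auto simp: cylinders_def cyl_def)

lemma cyl_sets: "cyl S m n w \<in> sets \<mu>"
  unfolding sets_mu by (rule sigma_sets.Basic) (auto simp: cylinders_def)

lemma S_nonempty: "S \<noteq> {}"
proof -
  interpret prob_space \<mu> by (rule prob)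
  show ?thesis using not_empty space_mu by auto
qed

lemma shiftn_pre_cyl: "shiftn j -` cyl S m n w \<inter> S = cyl S (m + j) (n + j) (shiftn (-j) w)"
  apply (auto simp: cyl_def SFT_shiftn shiftn_apply)
  subgoal for x i by (erule allE[of _ "i - j"]) auto
  done

lemma shiftn_meas: "shiftn j \<in> measurable \<mu> \<mu>"
proof (rule measurable_sigma_sets[OF sets_mu cylinders_sub])
  show "shiftn j \<in> space \<mu> \<rightarrow> S" by (auto simp: space_mu SFT_shiftn)
  fix y assume "y \<in> cylinders S"
  then obtain m n w where "y = cyl S m n w" by (auto simp: cylinders_def)
  then show "shiftn j -` y \<inter> space \<mu> \<in> sets \<mu>"
    using shiftn_pre_cyl cyl_sets space_mu by auto
qed

lemma shiftn_pre_sets: "B \<in> sets \<mu> \<Longrightarrow> shiftn j -` B \<inter> S \<in> sets \<mu>"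
  using measurable_sets[OF shiftn_meas] space_mu by auto

lemma sets_sub: "B \<in> sets \<mu> \<Longrightarrow> B \<subseteq> S"
  using sets.sets_into_space space_mu by auto

lemma mp_pos: "B \<in> sets \<mu> \<Longrightarrow> measure \<mu> (shiftn (int n) -` B \<inter> S) = measure \<mu> B"
proof (induction n arbitrary: B)
  case 0 then show ?case using sets_sub by (auto simp: Int_absorb2)
next
  case (Suc n)
  have eq: "shiftn (int (Suc n)) -` B \<inter> S = shift -` (shiftn (int n) -` B \<inter> S) \<inter> S"
    by (auto simp: shift_eq SFT_shiftn add.commute)
  show ?case unfolding eq using inv[OF shiftn_pre_sets[OF Suc.prems]] Suc by auto
qed

lemma mp_neg1: "B \<in> sets \<mu> \<Longrightarrow> measure \<mu> (shiftn (-1) -` B \<inter> S) = measure \<mu> B"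
proof -
  assume B: "B \<in> sets \<mu>"
  let ?X = "shiftn (-1) -` B \<inter> S"
  have e: "shift -` ?X \<inter> S = B" using sets_sub[OF B]
    by (auto simp: shift_eq SFT_shiftn)
  have "measure \<mu> (shift -` ?X \<inter> S) = measure \<mu> ?X"
    using inv[OF shiftn_pre_sets[OF B]] by blast
  then show ?thesis unfolding e by simp
qed

lemma mp_neg: "B \<in> sets \<mu> \<Longrightarrow> measure \<mu> (shiftn (- int n) -` B \<inter> S) = measure \<mu> B"
proof (induction n arbitrary: B)
  case 0 then show ?case using sets_sub by (auto simp: Int_absorb2)
next
  case (Suc n)
  have eq: "shiftn (- int (Suc n)) -` B \<inter> S = shiftn (-1) -` (shiftn (- int n) -` B \<inter> S) \<inter> S"
    by (auto simp: SFT_shiftn add.commute)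
  show ?case unfolding eq using mp_neg1[OF shiftn_pre_sets[OF Suc.prems]] Suc by auto
qed

lemma mp: "B \<in> sets \<mu> \<Longrightarrow> measure \<mu> (shiftn j -` B \<inter> S) = measure \<mu> B"
proof (cases "j \<ge> 0")
  case True then show "B \<in> sets \<mu> \<Longrightarrow> ?thesis" using mp_pos[of B "nat j"] by auto
next
  case False then show "B \<in> sets \<mu> \<Longrightarrow> ?thesis" using mp_neg[of B "nat (-j)"] by auto
qed

end


sublocale skew \<subseteq> P: prob_space \<mu> by (rule skew.prob[OF skew_axioms])

context skew begin

definition windowed :: "nat \<Rightarrow> seq set \<Rightarrow> bool" where
  "windowed m U \<longleftrightarrow> U \<subseteq> S \<and> (\<forall>x\<in>U. \<forall>y\<in>S. (\<forall>i. \<bar>i\<bar> \<le> int m \<longrightarrow> x i = y i) \<longrightarrow> y \<in> U)"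

lemma windowed_mono: "windowed m U \<Longrightarrow> m \<le> m' \<Longrightarrow> windowed m' U"
  unfolding windowed_def by (meson dual_order.trans of_nat_le_iff)

lemma windowed_compl: "windowed m U \<Longrightarrow> windowed m (S - U)"
  unfolding windowed_def by (metis Diff_iff Diff_subset)

lemma windowed_Un: "windowed m U \<Longrightarrow> windowed m V \<Longrightarrow> windowed m (U \<union> V)"
  unfolding windowed_def by auto

lemma windowed_empty: "windowed m {}"
  unfolding windowed_def by auto

lemma windowed_UN:
  assumes "finite I" "\<And>i. i \<in> I \<Longrightarrow> windowed (m i) (U i)"
  shows "windowed (\<Sum>i\<in>I. m i) (\<Union>i\<in>I. U i)"
  unfolding windowed_def
proof (intro conjI ballI impI)
  show "(\<Union>i\<in>I. U i) \<subseteq> S" using assms unfolding windowed_def by auto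
  fix x y assume x: "x \<in> (\<Union>i\<in>I. U i)" and y: "y \<in> S"
    and ag: "\<forall>i. \<bar>i\<bar> \<le> int (\<Sum>i\<in>I. m i) \<longrightarrow> x i = y i"
  then obtain i where i: "i \<in> I" "x \<in> U i" by auto
  have "m i \<le> (\<Sum>i\<in>I. m i)" using assms(1) i(1) by (intro member_le_sum) auto
  then have "windowed (\<Sum>i\<in>I. m i) (U i)" using windowed_mono assms(2) i(1) by blast
  then have "y \<in> U i" using i(2) y ag unfolding windowed_def by blast
  then show "y \<in> (\<Union>i\<in>I. U i)" using i(1) by auto
qed

lemma windowed_cyl: "windowed m (cyl S (- int m) (int m) x)"
  unfolding windowed_def cyl_def by auto

lemma cyl_win_eq:
  assumes "\<forall>i. \<bar>i\<bar> \<le> int m \<longrightarrow> x i = y i"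
  shows "cyl S (- int m) (int m) x = cyl S (- int m) (int m) y"
  using assms unfolding cyl_def by auto

lemma windowed_sets:
  assumes W: "windowed m U" shows "U \<in> sets \<mu>"
proof -
  define I where "I = [- int m..int m]"
  have setI: "set I = {- int m..int m}" by (simp add: I_def)
  have eq: "U = (\<Union>l\<in>(\<lambda>x. map x I) ` U. {y\<in>S. map y I = l})"
  proof (intro set_eqI iffI)
    fix y assume "y \<in> (\<Union>l\<in>(\<lambda>x. map x I) ` U. {y\<in>S. map y I = l})"
    then obtain x where x: "x \<in> U" "y \<in> S" "map y I = map x I" by auto
    then have "\<forall>i. \<bar>i\<bar> \<le> int m \<longrightarrow> x i = y i"
      by (auto simp: setI map_eq_conv abs_le_iff) 
    then show "y \<in> U" using W x unfolding windowed_def by blast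
  qed (use W in \<open>auto simp: windowed_def\<close>)
  have fin: "finite ((\<lambda>x. map x I) ` U)"
  proof (rule finite_subset)
    show "(\<lambda>x. map x I) ` U \<subseteq> {l. set l \<subseteq> {..<k} \<and> length l = length I}"
    proof
      fix l assume "l \<in> (\<lambda>x. map x I) ` U"
      then obtain x where "x \<in> U" "l = map x I" by auto
      moreover then have "x \<in> S" using W unfolding windowed_def by auto
      ultimately show "l \<in> {l. set l \<subseteq> {..<k} \<and> length l = length I}"
        unfolding SFT_def by auto
    qed
    show "finite {l. set l \<subseteq> {..<k} \<and> length l = length I}"
      by (rule finite_lists_length_eq) auto
  qed
  have "\<And>x. x \<in> U \<Longrightarrow> {y\<in>S. map y I = map x I} = cyl S (- int m) (int m) x"
    unfolding cyl_def by (auto simp: setI)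
  then have "\<And>l. l \<in> (\<lambda>x. map x I) ` U \<Longrightarrow> {y\<in>S. map y I = l} \<in> sets \<mu>"
    using cyl_sets by auto
  then show ?thesis by (subst eq) (rule sets.finite_UN[OF fin])
qed

end


lemma geo_bound: "0 \<le> (q::real) \<Longrightarrow> q < 1 \<Longrightarrow> (\<Sum>i<n. q ^ i) \<le> 1 / (1 - q)"
  by (simp add: sum_gp_strict divide_right_mono)

lemma two_sided_bound:
  fixes q :: real assumes q: "0 \<le> q" "q < 1"
  shows "(\<Sum>i<2*m+1. q ^ nat \<bar>int i - int m\<bar>) \<le> 2 / (1 - q)"
proof -
  have split: "(\<Sum>i<2*m+1. q ^ nat \<bar>int i - int m\<bar>) =
      (\<Sum>i<m. q ^ nat \<bar>int i - int m\<bar>) + (\<Sum>i=m..<m+(m+1). q ^ nat \<bar>int i - int m\<bar>)"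
  proof -
    let ?g = "\<lambda>i. q ^ nat \<bar>int i - int m\<bar>"
    have e: "{..<2*m+1} = {0..<m+(m+1)}" "{..<m} = {0..<m}" by auto
    have "sum ?g {0..<m} + sum ?g {m..<m+(m+1)} = sum ?g {0..<m+(m+1)}"
      by (rule sum.atLeastLessThan_concat) auto
    then show ?thesis by (simp only: e)
  qed
  have a: "(\<Sum>i<m. q ^ nat \<bar>int i - int m\<bar>) = (\<Sum>i<m. q ^ Suc i)"
  proof -
    have "(\<Sum>i<m. q ^ nat \<bar>int i - int m\<bar>) = (\<Sum>i<m. (\<lambda>j. q ^ Suc j) (m - Suc i))"
    proof (rule sum.cong)
      fix i assume "i \<in> {..<m}"
      then have "nat \<bar>int i - int m\<bar> = Suc (m - Suc i)" by auto
      then show "q ^ nat \<bar>int i - int m\<bar> = (\<lambda>j. q ^ Suc j) (m - Suc i)" by simp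
    qed auto
    also have "\<dots> = (\<Sum>i<m. q ^ Suc i)" by (rule sum.nat_diff_reindex)
    finally show ?thesis .
  qed
  have b: "(\<Sum>i=m..<m+(m+1). q ^ nat \<bar>int i - int m\<bar>) = (\<Sum>i<m+1. q ^ i)"
  proof -
    have "(\<Sum>i=m..<m+(m+1). q ^ nat \<bar>int i - int m\<bar>) = (\<Sum>i=0+m..<(m+1)+m. q ^ nat \<bar>int i - int m\<bar>)"
      by (simp add: add.commute)
    also have "\<dots> = (\<Sum>i=0..<m+1. q ^ nat \<bar>int (i + m) - int m\<bar>)"
      by (rule sum.shift_bounds_nat_ivl)
    also have "\<dots> = (\<Sum>i<m+1. q ^ i)" by (simp add: lessThan_atLeast0)
    finally show ?thesis .
  qed
  have "(\<Sum>i<m. q ^ Suc i) \<le> 1 / (1 - q)"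
  proof -
    have "(\<Sum>i<m. q ^ Suc i) = q * (\<Sum>i<m. q ^ i)" by (simp add: sum_distrib_left)
    also have "\<dots> \<le> 1 * (1 / (1 - q))" using geo_bound[OF q, of m] q
      by (intro mult_mono) (auto intro: sum_nonneg)
    finally show ?thesis by simp
  qed
  moreover have "(\<Sum>i<m+1. q ^ i) \<le> 1 / (1 - q)" by (rule geo_bound[OF q])
  ultimately show ?thesis unfolding split a b by simp
qed

context skew begin

lemma gibbs_data: "\<exists>\<phi> P c1 c2 q C. 0 < q \<and> q < 1 \<and> C \<ge> 0 \<and> 0 < c1 \<and> 0 < c2 \<and>
   (\<forall>x y r. x \<in> S \<longrightarrow> y \<in> S \<longrightarrow> (\<forall>j. \<bar>j\<bar> < int r \<longrightarrow> x j = y j) \<longrightarrow> \<bar>\<phi> x - \<phi> y\<bar> \<le> C * q ^ r) \<and>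
   (\<forall>x\<in>S. \<forall>n\<ge>1.
           c1 * exp (- real n * P + birkhoff \<phi> n x) \<le> measure \<mu> (cyl S 0 (int n - 1) x) \<and>
           measure \<mu> (cyl S 0 (int n - 1) x) \<le> c2 * exp (- real n * P + birkhoff \<phi> n x))"
proof -
  obtain \<phi> P c1 c2 where H: "holder S \<phi>" "0 < c1" "0 < c2" and
    G: "\<forall>x\<in>S. \<forall>n\<ge>1.
           c1 * exp (- real n * P + birkhoff \<phi> n x) \<le> measure \<mu> (cyl S 0 (int n - 1) x) \<and>
           measure \<mu> (cyl S 0 (int n - 1) x) \<le> c2 * exp (- real n * P + birkhoff \<phi> n x)"
    using gib unfolding gibbs_measure_def by blast
  obtain t a C where t: "0 < t" "t < 1" "0 < a" "a \<le> 1" and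
    HC: "\<forall>x\<in>S. \<forall>y\<in>S. \<bar>\<phi> x - \<phi> y\<bar> \<le> C * d_theta t x y powr a"
    using H(1) unfolding holder_def by blast
  define q where "q = t powr a"
  have "t powr a < 1 powr a" using t by (intro powr_less_mono2) auto
  then have q: "0 < q" "q < 1" using t by (auto simp: q_def)
  have "\<bar>\<phi> x - \<phi> y\<bar> \<le> max C 0 * q ^ r"
    if xy: "x \<in> S" "y \<in> S" "\<forall>j. \<bar>j\<bar> < int r \<longrightarrow> x j = y j" for x y r
  proof -
    have d0: "0 \<le> d_theta t x y" using t by (simp add: d_theta_nonneg)
    have "d_theta t x y \<le> t ^ r" using d_theta_le[of t r x y] t xy by auto
    then have "d_theta t x y powr a \<le> (t ^ r) powr a" using d0 t by (intro powr_mono2) auto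
    also have "(t ^ r) powr a = q ^ r" using t
      by (simp add: q_def powr_realpow[symmetric] powr_powr powr_power mult.commute)
    finally have dq: "d_theta t x y powr a \<le> q ^ r" .
    have "\<bar>\<phi> x - \<phi> y\<bar> \<le> C * d_theta t x y powr a" using HC xy by auto
    also have "\<dots> \<le> max C 0 * d_theta t x y powr a" by (intro mult_right_mono) auto
    also have "\<dots> \<le> max C 0 * q ^ r" using dq by (intro mult_left_mono) auto
    finally show ?thesis .
  qed
  then show ?thesis using q H G by (intro exI[of _ \<phi>] exI[of _ P] exI[of _ c1] exI[of _ c2] exI[of _ q] exI[of _ "max C 0"]) auto
qed

lemma cyl_shift_measure:
  "measure \<mu> (cyl S (- int m) (int m) x) = measure \<mu> (cyl S 0 (2 * int m) (shiftn (- int m) x))"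
proof -
  have "shiftn (- int m) -` cyl S 0 (2 * int m) (shiftn (- int m) x) \<inter> S = cyl S (- int m) (int m) x"
    by (simp add: shiftn_pre_cyl)
  then show ?thesis using mp[OF cyl_sets, of "- int m" 0 "2 * int m" "shiftn (- int m) x"] by simp
qed

lemma gibbs_swap:
  "\<exists>K>0. \<forall>x x' m. x \<in> S \<longrightarrow> x' \<in> S \<longrightarrow> (\<forall>i. \<bar>i\<bar> > int L \<longrightarrow> x i = x' i) \<longrightarrow> L \<le> m \<longrightarrow>
      measure \<mu> (cyl S (- int m) (int m) x') \<le> K * measure \<mu> (cyl S (- int m) (int m) x)"
proof -
  obtain \<phi> P c1 c2 q C where q: "0 < q" "q < 1" "C \<ge> 0" "0 < c1" "0 < c2" and
    HA: "\<forall>x y r. x \<in> S \<longrightarrow> y \<in> S \<longrightarrow> (\<forall>j. \<bar>j\<bar> < int r \<longrightarrow> x j = y j) \<longrightarrow> \<bar>\<phi> x - \<phi> y\<bar> \<le> C * q ^ r" and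
    G: "\<forall>x\<in>S. \<forall>n\<ge>1.
           c1 * exp (- real n * P + birkhoff \<phi> n x) \<le> measure \<mu> (cyl S 0 (int n - 1) x) \<and>
           measure \<mu> (cyl S 0 (int n - 1) x) \<le> c2 * exp (- real n * P + birkhoff \<phi> n x)"
    using gibbs_data by blast
  define H where "H = C / q ^ L * (2 / (1 - q))"
  define K where "K = c2 / c1 * exp H"
  have "K > 0" using q by (simp add: K_def)
  moreover have "measure \<mu> (cyl S (- int m) (int m) x') \<le> K * measure \<mu> (cyl S (- int m) (int m) x)"
    if x: "x \<in> S" "x' \<in> S" and ag: "\<forall>i. \<bar>i\<bar> > int L \<longrightarrow> x i = x' i" and Lm: "L \<le> m" for x x' m
  proof -
    define u where "u = shiftn (- int m) x"
    define u' where "u' = shiftn (- int m) x'"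
    define n where "n = 2 * m + 1"
    have u: "u \<in> S" "u' \<in> S" using x by (auto simp: u_def u'_def SFT_shiftn)
    have n1: "n \<ge> 1" "int n - 1 = 2 * int m" by (auto simp: n_def)
    have termb: "\<bar>\<phi> (shiftn (int i) u') - \<phi> (shiftn (int i) u)\<bar> \<le> C / q ^ L * q ^ nat \<bar>int i - int m\<bar>" for i
    proof -
      define r where "r = nat (\<bar>int i - int m\<bar> - int L)"
      have "\<forall>j. \<bar>j\<bar> < int r \<longrightarrow> shiftn (int i) u' j = shiftn (int i) u j"
      proof (intro allI impI)
        fix j assume "\<bar>j\<bar> < int r"
        then have "\<bar>j + int i - int m\<bar> > int L" by (simp add: r_def split: if_splits; arith)
        then show "shiftn (int i) u' j = shiftn (int i) u j"
          using ag by (auto simp: u_def u'_def shiftn_apply algebra_simps)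
      qed
      then have 1: "\<bar>\<phi> (shiftn (int i) u') - \<phi> (shiftn (int i) u)\<bar> \<le> C * q ^ r"
        using HA u by (auto simp: SFT_shiftn)
      have 2: "q ^ r \<le> q ^ nat \<bar>int i - int m\<bar> / q ^ L"
      proof -
        have "q ^ r * q ^ L = q ^ (r + L)" by (simp add: power_add)
        also have "\<dots> \<le> q ^ nat \<bar>int i - int m\<bar>" using q by (intro power_decreasing) (auto simp: r_def)
        finally show ?thesis using q by (simp add: field_simps)
      qed
      have "C * q ^ r \<le> C * (q ^ nat \<bar>int i - int m\<bar> / q ^ L)"
        using 2 q by (intro mult_left_mono) auto
      then show ?thesis using 1 by simp
    qed
    have "birkhoff \<phi> n u' - birkhoff \<phi> n u \<le> H"
    proof -
      have "birkhoff \<phi> n u' - birkhoff \<phi> n u = (\<Sum>i<n. \<phi> (shiftn (int i) u') - \<phi> (shiftn (int i) u))"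
        by (simp add: birkhoff_alt sum_subtractf)
      also have "\<dots> \<le> (\<Sum>i<n. C / q ^ L * q ^ nat \<bar>int i - int m\<bar>)"
        by (intro sum_mono) (use termb in \<open>auto simp: abs_le_iff\<close>)
      also have "\<dots> = C / q ^ L * (\<Sum>i<2*m+1. q ^ nat \<bar>int i - int m\<bar>)"
        by (simp only: n_def sum_distrib_left)
      also have "\<dots> \<le> C / q ^ L * (2 / (1 - q))"
        using two_sided_bound[of q m] q by (intro mult_left_mono) auto
      finally show ?thesis by (simp add: H_def)
    qed
    have e1: "measure \<mu> (cyl S (- int m) (int m) x') = measure \<mu> (cyl S 0 (int n - 1) u')"
      by (simp only: cyl_shift_measure u'_def n1(2))
    have e2: "measure \<mu> (cyl S (- int m) (int m) x) = measure \<mu> (cyl S 0 (int n - 1) u)"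
      by (simp only: cyl_shift_measure u_def n1(2))
    have m1: "measure \<mu> (cyl S (- int m) (int m) x') \<le> c2 * exp (- real n * P + birkhoff \<phi> n u')"
      unfolding e1 using G u n1(1) by blast
    have m2: "c1 * exp (- real n * P + birkhoff \<phi> n u) \<le> measure \<mu> (cyl S (- int m) (int m) x)"
      unfolding e2 using G u n1(1) by blast
    have "c2 * exp (- real n * P + birkhoff \<phi> n u') \<le> c2 * exp (- real n * P + birkhoff \<phi> n u + H)"
      using q \<open>birkhoff \<phi> n u' - birkhoff \<phi> n u \<le> H\<close> by simp
    also have "\<dots> = K * (c1 * exp (- real n * P + birkhoff \<phi> n u))"
      using q by (simp add: K_def exp_add)
    also have "\<dots> \<le> K * measure \<mu> (cyl S (- int m) (int m) x)"
      using m2 \<open>K > 0\<close> by (intro mult_left_mono) auto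
    finally show ?thesis using m1 by linarith
  qed
  ultimately show ?thesis by blast
qed

end


context skew begin

lemma windowed_cyl_gen: "windowed (nat (max \<bar>m\<bar> \<bar>n\<bar>)) (cyl S m n w)"
  unfolding windowed_def cyl_def by auto

definition sdiff :: "'a set \<Rightarrow> 'a set \<Rightarrow> 'a set" where "sdiff X Y = (X - Y) \<union> (Y - X)"

lemma sets_sigma: "sigma_sets S (cylinders S) = sets \<mu>" using sets_mu by simp

lemma approx:
  assumes T: "T \<in> measurable \<mu> \<mu>" and Z: "Z \<in> sets \<mu>" and B: "B \<in> sets \<mu>"
  shows "\<forall>\<epsilon>>0. \<exists>U m. windowed m U \<and> measure \<mu> (sdiff B U) < \<epsilon> \<and> measure \<mu> (T -` sdiff B U \<inter> Z) < \<epsilon>"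
proof -
  have Zs: "Z \<subseteq> S" using sets_sub[OF Z] .
  have pre: "X \<in> sets \<mu> \<Longrightarrow> T -` X \<inter> Z \<in> sets \<mu>" for X
  proof -
    assume "X \<in> sets \<mu>"
    then have "T -` X \<inter> space \<mu> \<in> sets \<mu>" using T by (intro measurable_sets[OF T])
    moreover have "T -` X \<inter> Z = (T -` X \<inter> space \<mu>) \<inter> Z" using Zs space_mu by auto
    ultimately show ?thesis using Z by auto
  qed
  have "B \<in> sigma_sets S (cylinders S)" using B sets_mu by simp
  then show ?thesis
  proof (induction rule: sigma_sets.induct)
    case (Basic a)
    then obtain m n w where a: "a = cyl S m n w" by (auto simp: cylinders_def)
    show ?case
      by (intro allI impI exI[of _ a] exI[of _ "nat (max \<bar>m\<bar> \<bar>n\<bar>)"]) (auto simp: a windowed_cyl_gen sdiff_def)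
  next
    case Empty
    show ?case by (intro allI impI exI[of _ "{}"] exI[of _ 0]) (auto simp: windowed_empty sdiff_def)
  next
    case (Compl a)
    show ?case
    proof (intro allI impI)
      fix \<epsilon> :: real assume "\<epsilon> > 0"
      then obtain U m where U: "windowed m U" "measure \<mu> (sdiff a U) < \<epsilon>" "measure \<mu> (T -` sdiff a U \<inter> Z) < \<epsilon>"
        using Compl.IH by blast
      have aS: "a \<subseteq> S" using Compl.hyps sets_sigma sets_sub by blast
      have US: "U \<subseteq> S" using U(1) by (auto simp: windowed_def)
      have "sdiff (S - a) (S - U) = sdiff a U" using aS US by (auto simp: sdiff_def)
      then show "\<exists>U m. windowed m U \<and> measure \<mu> (sdiff (S - a) U) < \<epsilon> \<and> measure \<mu> (T -` sdiff (S - a) U \<inter> Z) < \<epsilon>"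
        using U windowed_compl[OF U(1)] by metis
    qed
  next
    case (Union A)
    let ?B = "\<Union>i. A i"
    have As: "A i \<in> sets \<mu>" for i using Union.hyps sets_sigma by blast
    define BN where "BN N = (\<Union>i<N. A i)" for N
    have BNs: "BN N \<in> sets \<mu>" for N unfolding BN_def using As by auto
    have incBN: "incseq BN" unfolding BN_def incseq_def by (auto, meson lessThan_iff order_less_le_trans)
    have unBN: "(\<Union>N. BN N) = ?B" unfolding BN_def by auto
    have Bs: "?B \<in> sets \<mu>" using As by auto
    have lim1: "(\<lambda>N. measure \<mu> (BN N)) \<longlonglongrightarrow> measure \<mu> ?B"
      using P.finite_Lim_measure_incseq[of BN] BNs incBN unBN by auto
    have lim2: "(\<lambda>N. measure \<mu> (T -` BN N \<inter> Z)) \<longlonglongrightarrow> measure \<mu> (T -` ?B \<inter> Z)"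
    proof -
      have e: "(\<Union>N. T -` BN N \<inter> Z) = T -` ?B \<inter> Z" using unBN by blast
      have "incseq (\<lambda>N. T -` BN N \<inter> Z)" using incBN unfolding incseq_def by auto
      moreover have "range (\<lambda>N. T -` BN N \<inter> Z) \<subseteq> sets \<mu>" using BNs pre by auto
      ultimately have "(\<lambda>N. measure \<mu> (T -` BN N \<inter> Z)) \<longlonglongrightarrow> measure \<mu> (\<Union>N. T -` BN N \<inter> Z)"
        using P.finite_Lim_measure_incseq[of "\<lambda>N. T -` BN N \<inter> Z"] by blast
      then show ?thesis unfolding e .
    qed
    show ?case
    proof (intro allI impI)
      fix \<epsilon> :: real assume e: "\<epsilon> > 0"
      obtain N1 where N1: "\<forall>N\<ge>N1. dist (measure \<mu> (BN N)) (measure \<mu> ?B) < \<epsilon>/3"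
        using lim1 e unfolding LIMSEQ_def by (meson divide_pos_pos zero_less_numeral)
      obtain N2 where N2: "\<forall>N\<ge>N2. dist (measure \<mu> (T -` BN N \<inter> Z)) (measure \<mu> (T -` ?B \<inter> Z)) < \<epsilon>/3"
        using lim2 e unfolding LIMSEQ_def by (meson divide_pos_pos zero_less_numeral)
      define N where "N = max N1 N2"
      define \<delta> where "\<delta> = \<epsilon> / (3 * (real N + 1))"
      have dpos: "\<delta> > 0" using e by (simp add: \<delta>_def)
      have "\<forall>i. \<exists>Um. windowed (snd Um) (fst Um) \<and> measure \<mu> (sdiff (A i) (fst Um)) < \<delta> \<and>
                  measure \<mu> (T -` sdiff (A i) (fst Um) \<inter> Z) < \<delta>"
        using Union.IH dpos by fastforce
      then obtain Um where Um: "\<And>i. windowed (snd (Um i)) (fst (Um i))"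
        "\<And>i. measure \<mu> (sdiff (A i) (fst (Um i))) < \<delta>"
        "\<And>i. measure \<mu> (T -` sdiff (A i) (fst (Um i)) \<inter> Z) < \<delta>"
        by metis
      define U where "U = (\<Union>i<N. fst (Um i))"
      have Uw: "windowed (\<Sum>i<N. snd (Um i)) U" unfolding U_def by (rule windowed_UN) (auto simp: Um)
      have Us: "fst (Um i) \<in> sets \<mu>" for i using Um(1) windowed_sets by blast
      have sds: "sdiff (A i) (fst (Um i)) \<in> sets \<mu>" for i using As Us by (auto simp: sdiff_def)
      have sub: "sdiff ?B U \<subseteq> (?B - BN N) \<union> (\<Union>i<N. sdiff (A i) (fst (Um i)))"
        unfolding sdiff_def U_def BN_def by blast
      have m1: "measure \<mu> (?B - BN N) < \<epsilon>/3"
      proof -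
        have "BN N \<subseteq> ?B" using unBN by auto
        then have "measure \<mu> (?B - BN N) = measure \<mu> ?B - measure \<mu> (BN N)"
          using Bs BNs by (simp add: P.finite_measure_Diff)
        moreover have "\<bar>measure \<mu> (BN N) - measure \<mu> ?B\<bar> < \<epsilon>/3"
          using N1[rule_format, of N] by (simp add: N_def dist_real_def)
        ultimately show ?thesis unfolding abs_less_iff by linarith
      qed
      have m2: "measure \<mu> ((T -` ?B \<inter> Z) - (T -` BN N \<inter> Z)) < \<epsilon>/3"
      proof -
        have "T -` BN N \<inter> Z \<subseteq> T -` ?B \<inter> Z" unfolding BN_def by blast
        then have "measure \<mu> ((T -` ?B \<inter> Z) - (T -` BN N \<inter> Z)) = measure \<mu> (T -` ?B \<inter> Z) - measure \<mu> (T -` BN N \<inter> Z)"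
          using pre[OF Bs] pre[OF BNs] by (simp add: P.finite_measure_Diff)
        moreover have "\<bar>measure \<mu> (T -` BN N \<inter> Z) - measure \<mu> (T -` ?B \<inter> Z)\<bar> < \<epsilon>/3"
          using N2[rule_format, of N] by (simp add: N_def dist_real_def)
        ultimately show ?thesis unfolding abs_less_iff by linarith
      qed
      have sumb: "(\<Sum>i<N. \<delta>) \<le> \<epsilon>/3" using e by (simp add: \<delta>_def field_simps)
      have u1: "measure \<mu> (\<Union>i<N. sdiff (A i) (fst (Um i))) \<le> (\<Sum>i<N. \<delta>)"
      proof -
        have "measure \<mu> (\<Union>i<N. sdiff (A i) (fst (Um i))) \<le> (\<Sum>i<N. measure \<mu> (sdiff (A i) (fst (Um i))))"
          using sds by (intro measure_UNION_le) auto
        also have "\<dots> \<le> (\<Sum>i<N. \<delta>)" using Um(2) by (intro sum_mono) (auto intro: less_imp_le)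
        finally show ?thesis .
      qed
      have "measure \<mu> (sdiff ?B U) \<le> measure \<mu> ((?B - BN N) \<union> (\<Union>i<N. sdiff (A i) (fst (Um i))))"
        using sub Bs BNs sds by (intro P.finite_measure_mono) auto
      also have "\<dots> \<le> measure \<mu> (?B - BN N) + measure \<mu> (\<Union>i<N. sdiff (A i) (fst (Um i)))"
        using Bs BNs sds by (intro measure_Un_le) auto
      finally have r1: "measure \<mu> (sdiff ?B U) < \<epsilon>" using m1 sumb u1 e by linarith
      have U2s: "(\<Union>i<N. T -` sdiff (A i) (fst (Um i)) \<inter> Z) \<in> sets \<mu>"
        using pre[OF sds] by (intro sets.finite_UN) auto
      have sub2: "T -` sdiff ?B U \<inter> Z \<subseteq> ((T -` ?B \<inter> Z) - (T -` BN N \<inter> Z)) \<union> (\<Union>i<N. T -` sdiff (A i) (fst (Um i)) \<inter> Z)"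
      proof
        fix x assume x: "x \<in> T -` sdiff ?B U \<inter> Z"
        then have "T x \<in> (?B - BN N) \<union> (\<Union>i<N. sdiff (A i) (fst (Um i)))" using sub by auto
        then show "x \<in> ((T -` ?B \<inter> Z) - (T -` BN N \<inter> Z)) \<union> (\<Union>i<N. T -` sdiff (A i) (fst (Um i)) \<inter> Z)"
          using x by auto
      qed
      have u2: "measure \<mu> (\<Union>i<N. T -` sdiff (A i) (fst (Um i)) \<inter> Z) \<le> (\<Sum>i<N. \<delta>)"
      proof -
        have "measure \<mu> (\<Union>i<N. T -` sdiff (A i) (fst (Um i)) \<inter> Z) \<le> (\<Sum>i<N. measure \<mu> (T -` sdiff (A i) (fst (Um i)) \<inter> Z))"
          using pre[OF sds] by (intro measure_UNION_le) auto
        also have "\<dots> \<le> (\<Sum>i<N. \<delta>)" using Um(3) by (intro sum_mono) (auto intro: less_imp_le)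
        finally show ?thesis .
      qed
      have "measure \<mu> (T -` sdiff ?B U \<inter> Z) \<le> measure \<mu> (((T -` ?B \<inter> Z) - (T -` BN N \<inter> Z)) \<union> (\<Union>i<N. T -` sdiff (A i) (fst (Um i)) \<inter> Z))"
        by (rule P.finite_measure_mono[OF sub2]) (intro sets.Un sets.Diff pre[OF Bs] pre[OF BNs] U2s)
      also have "\<dots> \<le> measure \<mu> ((T -` ?B \<inter> Z) - (T -` BN N \<inter> Z)) + measure \<mu> (\<Union>i<N. T -` sdiff (A i) (fst (Um i)) \<inter> Z)"
        by (intro measure_Un_le sets.Diff pre[OF Bs] pre[OF BNs] U2s)
      finally have r2: "measure \<mu> (T -` sdiff ?B U \<inter> Z) < \<epsilon>" using m2 sumb u2 e by linarith
      show "\<exists>U m. windowed m U \<and> measure \<mu> (sdiff ?B U) < \<epsilon> \<and> measure \<mu> (T -` sdiff ?B U \<inter> Z) < \<epsilon>"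
        using Uw r1 r2 by blast
    qed
  qed
qed

end


context skew begin

definition swp :: "nat \<Rightarrow> seq \<Rightarrow> seq \<Rightarrow> seq" where
  "swp L c z = (\<lambda>i. if \<bar>i\<bar> \<le> int L then c i else z i)"

lemma swp_S:
  assumes "c \<in> S" "z \<in> S" "z (int L + 1) = c (int L + 1)" "z (- int L - 1) = c (- int L - 1)"
  shows "swp L c z \<in> S"
  unfolding SFT_def mem_Collect_eq
proof
  fix i
  have c: "c i < k \<and> A (c i) (c (i + 1))" and z: "z i < k \<and> A (z i) (z (i + 1))"
    using assms(1,2) by (auto simp: SFT_def)
  show "swp L c z i < k \<and> A (swp L c z i) (swp L c z (i + 1))"
  proof (cases "\<bar>i\<bar> \<le> int L")
    case True
    show ?thesis
    proof (cases "\<bar>i + 1\<bar> \<le> int L")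
      case True2: True
      then show ?thesis using True c by (auto simp: swp_def)
    next
      case False
      then have "i = int L" using True by auto
      then show ?thesis using True False c assms(3) by (auto simp: swp_def)
    qed
  next
    case False
    show ?thesis
    proof (cases "\<bar>i + 1\<bar> \<le> int L")
      case True
      then have "i = - int L - 1" using False by auto
      then show ?thesis using True False c assms(4) by (auto simp: swp_def)
    next
      case False2: False
      then show ?thesis using False z by (auto simp: swp_def)
    qed
  qed
qed

lemma pre_windowed:
  assumes FS: "\<And>x. x \<in> S \<Longrightarrow> F x \<in> S"
    and loc: "\<And>x y. x \<in> S \<Longrightarrow> y \<in> S \<Longrightarrow> (\<forall>i. \<bar>i\<bar> \<le> int M \<longrightarrow> x i = y i) \<Longrightarrow> (\<forall>i. \<bar>i\<bar> \<le> int M \<longrightarrow> F x i = F y i)"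
    and U: "windowed M U"
  shows "windowed M (F -` U \<inter> S)"
  using U FS loc unfolding windowed_def by blast

lemma cyl_disj:
  assumes "y \<in> cyl S (- int m) (int m) x" "y \<in> cyl S (- int m) (int m) x'"
  shows "map x [- int m..int m] = map x' [- int m..int m]"
  using assms unfolding cyl_def by (auto simp: map_eq_conv)

end

locale swap_setup = skew +
  fixes a b :: seq and L L' :: nat
  assumes aS: "a \<in> S" and bS: "b \<in> S" and hom: "\<forall>i. \<bar>i\<bar> > int L \<longrightarrow> a i = b i"
    and LL: "L + 1 \<le> L'"
begin

definition "Za = cyl S (- int L') (int L') a"
definition "Psi z = (if z \<in> Za then swp L b z else z)"

lemma Za_sets: "Za \<in> sets \<mu>" unfolding Za_def by (rule cyl_sets)

lemma Psi_S: "z \<in> S \<Longrightarrow> Psi z \<in> S"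
proof -
  assume z: "z \<in> S"
  show ?thesis
  proof (cases "z \<in> Za")
    case True
    then have "z (int L + 1) = a (int L + 1)" "z (- int L - 1) = a (- int L - 1)"
      using LL by (auto simp: Za_def cyl_def)
    moreover have "a (int L + 1) = b (int L + 1)" "a (- int L - 1) = b (- int L - 1)"
      using hom by auto
    ultimately show ?thesis using True z bS by (auto simp: Psi_def intro!: swp_S)
  qed (use z in \<open>auto simp: Psi_def\<close>)
qed

lemma Psi_loc:
  assumes "x \<in> S" "y \<in> S" "\<forall>i. \<bar>i\<bar> \<le> int M \<longrightarrow> x i = y i" "L' \<le> M"
  shows "\<forall>i. \<bar>i\<bar> \<le> int M \<longrightarrow> Psi x i = Psi y i"
proof -
  have "x \<in> Za \<longleftrightarrow> y \<in> Za" using assms unfolding Za_def cyl_def by auto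
  then show ?thesis using assms by (auto simp: Psi_def swp_def)
qed

lemma Psi_meas: "Psi \<in> measurable \<mu> \<mu>"
proof (rule measurable_sigma_sets[OF sets_mu cylinders_sub])
  show "Psi \<in> space \<mu> \<rightarrow> S" using Psi_S space_mu by auto
  fix y assume "y \<in> cylinders S"
  then obtain m n w where y: "y = cyl S m n w" by (auto simp: cylinders_def)
  define M where "M = max (nat (max \<bar>m\<bar> \<bar>n\<bar>)) L'"
  have "windowed M y" using windowed_cyl_gen[of m n w] y windowed_mono M_def by auto
  have loc: "\<forall>i. \<bar>i\<bar> \<le> int M \<longrightarrow> Psi x i = Psi z i"
    if "x \<in> S" "z \<in> S" "\<forall>i. \<bar>i\<bar> \<le> int M \<longrightarrow> x i = z i" for x z
    using Psi_loc[of x z M] that by (auto simp: M_def)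
  have "windowed M (Psi -` y \<inter> S)"
    by (rule pre_windowed[OF Psi_S loc \<open>windowed M y\<close>])
  then show "Psi -` y \<inter> space \<mu> \<in> sets \<mu>" using windowed_sets space_mu by auto
qed

lemma Psi_pre_sets: "E \<in> sets \<mu> \<Longrightarrow> Psi -` E \<inter> Za \<in> sets \<mu>"
proof -
  assume "E \<in> sets \<mu>"
  then have "Psi -` E \<inter> space \<mu> \<in> sets \<mu>" by (intro measurable_sets[OF Psi_meas])
  moreover have "Psi -` E \<inter> Za = (Psi -` E \<inter> space \<mu>) \<inter> Za"
    using sets_sub[OF Za_sets] space_mu by auto
  ultimately show ?thesis using Za_sets by auto
qed

end


context swap_setup begin

lemma windowed_cyl_sub:
  assumes "windowed m U" "x \<in> U" shows "cyl S (- int m) (int m) x \<subseteq> U"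
proof
  fix y assume y: "y \<in> cyl S (- int m) (int m) x"
  then have "\<forall>i. \<bar>i\<bar> \<le> int m \<longrightarrow> x i = y i" unfolding cyl_def by (auto simp: abs_le_iff)
  then show "y \<in> U" using assms y unfolding windowed_def cyl_def by blast
qed

lemma ratio:
  assumes U: "windowed m U" and mL: "L' \<le> m" and K: "K > 0"
    and KG: "\<forall>x x' m. x \<in> S \<longrightarrow> x' \<in> S \<longrightarrow> (\<forall>i. \<bar>i\<bar> > int L \<longrightarrow> x i = x' i) \<longrightarrow> L \<le> m \<longrightarrow>
      measure \<mu> (cyl S (- int m) (int m) x') \<le> K * measure \<mu> (cyl S (- int m) (int m) x)"
  shows "measure \<mu> (Psi -` U \<inter> Za) \<le> K * measure \<mu> U"
proof -
  define I where "I = [- int m..int m]"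
  define V where "V = Psi -` U \<inter> Za"
  define \<Lambda> where "\<Lambda> = (\<lambda>z. map (Psi z) I) ` V"
  define zl where "zl l = (SOME z. z \<in> V \<and> map (Psi z) I = l)" for l
  have zl: "zl l \<in> V \<and> map (Psi (zl l)) I = l" if "l \<in> \<Lambda>" for l
  proof -
    from that obtain z where "z \<in> V" "l = map (Psi z) I" by (auto simp: \<Lambda>_def)
    then have "\<exists>z. z \<in> V \<and> map (Psi z) I = l" by blast
    then show ?thesis unfolding zl_def by (rule someI_ex)
  qed
  have ZaS: "Za \<subseteq> S" by (auto simp: Za_def cyl_def)
  have VS: "V \<subseteq> S" using ZaS by (auto simp: V_def)
  have US: "U \<subseteq> S" using U by (auto simp: windowed_def)
  have fin: "finite \<Lambda>"
  proof (rule finite_subset)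
    show "\<Lambda> \<subseteq> {l. set l \<subseteq> {..<k} \<and> length l = length I}"
    proof
      fix l assume "l \<in> \<Lambda>"
      then obtain z where "z \<in> V" "l = map (Psi z) I" by (auto simp: \<Lambda>_def)
      moreover then have "Psi z \<in> S" using VS Psi_S by auto
      ultimately show "l \<in> {l. set l \<subseteq> {..<k} \<and> length l = length I}"
        unfolding SFT_def by auto
    qed
    show "finite {l. set l \<subseteq> {..<k} \<and> length l = length I}"
      by (rule finite_lists_length_eq) auto
  qed
  have setI: "set I = {- int m..int m}" by (simp add: I_def)
  have cover: "V \<subseteq> (\<Union>l\<in>\<Lambda>. cyl S (- int m) (int m) (zl l))"
  proof
    fix z assume z: "z \<in> V"
    define l where "l = map (Psi z) I"
    have l: "l \<in> \<Lambda>" using z by (auto simp: \<Lambda>_def l_def)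
    have z': "zl l \<in> V" "map (Psi (zl l)) I = map (Psi z) I" using zl[OF l] by (auto simp: l_def)
    have "z i = zl l i" if i: "\<bar>i\<bar> \<le> int m" for i
    proof (cases "\<bar>i\<bar> \<le> int L")
      case True
      then have "- int L' \<le> i \<and> i \<le> int L'" using LL by auto
      then show ?thesis using z z'(1) by (auto simp: V_def Za_def cyl_def)
    next
      case False
      have "i \<in> set I" using i by (auto simp: setI abs_le_iff)
      then have "Psi z i = Psi (zl l) i" using z'(2) by (auto simp: map_eq_conv)
      then show ?thesis using False z z'(1) by (auto simp: Psi_def swp_def V_def)
    qed
    then have "z \<in> cyl S (- int m) (int m) (zl l)" using z VS by (auto simp: cyl_def)
    then show "z \<in> (\<Union>l\<in>\<Lambda>. cyl S (- int m) (int m) (zl l))" using l by auto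
  qed
  have "measure \<mu> V \<le> measure \<mu> (\<Union>l\<in>\<Lambda>. cyl S (- int m) (int m) (zl l))"
    using cover fin by (intro P.finite_measure_mono sets.finite_UN cyl_sets) auto
  also have "\<dots> \<le> (\<Sum>l\<in>\<Lambda>. measure \<mu> (cyl S (- int m) (int m) (zl l)))"
    using fin by (intro measure_UNION_le cyl_sets)
  also have "\<dots> \<le> (\<Sum>l\<in>\<Lambda>. K * measure \<mu> (cyl S (- int m) (int m) (Psi (zl l))))"
  proof (intro sum_mono)
    fix l assume l: "l \<in> \<Lambda>"
    have zV: "zl l \<in> V" using zl[OF l] by auto
    then have "zl l \<in> Za" "zl l \<in> S" using VS by (auto simp: V_def)
    then show "measure \<mu> (cyl S (- int m) (int m) (zl l)) \<le> K * measure \<mu> (cyl S (- int m) (int m) (Psi (zl l)))"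
      using KG Psi_S[of "zl l"] mL LL by (auto simp: Psi_def swp_def)
  qed
  also have "\<dots> = K * measure \<mu> (\<Union>l\<in>\<Lambda>. cyl S (- int m) (int m) (Psi (zl l)))"
  proof -
    have "disjoint_family_on (\<lambda>l. cyl S (- int m) (int m) (Psi (zl l))) \<Lambda>"
      unfolding disjoint_family_on_def
    proof (intro ballI impI)
      fix l l' assume l: "l \<in> \<Lambda>" "l' \<in> \<Lambda>" "l \<noteq> l'"
      show "cyl S (- int m) (int m) (Psi (zl l)) \<inter> cyl S (- int m) (int m) (Psi (zl l')) = {}"
      proof (rule ccontr)
        assume "cyl S (- int m) (int m) (Psi (zl l)) \<inter> cyl S (- int m) (int m) (Psi (zl l')) \<noteq> {}"
        then obtain y where "y \<in> cyl S (- int m) (int m) (Psi (zl l))" "y \<in> cyl S (- int m) (int m) (Psi (zl l'))" by auto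
        then have "map (Psi (zl l)) I = map (Psi (zl l')) I" unfolding I_def by (metis cyl_disj)
        then show False using zl[OF l(1)] zl[OF l(2)] l(3) by auto
      qed
    qed
    then show ?thesis using fin
      by (simp add: P.finite_measure_finite_Union cyl_sets image_subset_iff sum_distrib_left)
  qed
  also have "\<dots> \<le> K * measure \<mu> U"
  proof -
    have "(\<Union>l\<in>\<Lambda>. cyl S (- int m) (int m) (Psi (zl l))) \<subseteq> U"
    proof (intro UN_least subsetI)
      fix l y assume l: "l \<in> \<Lambda>" and y: "y \<in> cyl S (- int m) (int m) (Psi (zl l))"
      have "Psi (zl l) \<in> U" using zl[OF l] by (auto simp: V_def)
      then show "y \<in> U" using windowed_cyl_sub[OF U] y by auto
    qed
    then show ?thesis using K windowed_sets[OF U] by (intro mult_left_mono P.finite_measure_mono) auto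
  qed
  finally show ?thesis by (simp add: V_def)
qed

lemma nonsing: "\<exists>K>0. \<forall>E\<in>sets \<mu>. measure \<mu> (Psi -` E \<inter> Za) \<le> K * measure \<mu> E"
proof -
  obtain K where K: "K > 0" and KG: "\<forall>x x' m. x \<in> S \<longrightarrow> x' \<in> S \<longrightarrow> (\<forall>i. \<bar>i\<bar> > int L \<longrightarrow> x i = x' i) \<longrightarrow> L \<le> m \<longrightarrow>
      measure \<mu> (cyl S (- int m) (int m) x') \<le> K * measure \<mu> (cyl S (- int m) (int m) x)"
    using gibbs_swap[of L] by blast
  have "measure \<mu> (Psi -` E \<inter> Za) \<le> K * measure \<mu> E" if E: "E \<in> sets \<mu>" for E
  proof (rule field_le_epsilon)
    fix \<epsilon> :: real assume e: "\<epsilon> > 0"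
    define \<delta> where "\<delta> = \<epsilon> / (K + 1)"
    have d: "\<delta> > 0" using e K by (simp add: \<delta>_def)
    obtain U m where U: "windowed m U" "measure \<mu> (sdiff E U) < \<delta>" "measure \<mu> (Psi -` sdiff E U \<inter> Za) < \<delta>"
      using approx[OF Psi_meas Za_sets E] d by blast
    have U': "windowed (max m L') U" using U(1) windowed_mono by auto
    have Us: "U \<in> sets \<mu>" using U(1) windowed_sets by auto
    have sds: "sdiff E U \<in> sets \<mu>" using Us E by (auto simp: sdiff_def)
    have "Psi -` E \<inter> Za \<subseteq> (Psi -` U \<inter> Za) \<union> (Psi -` sdiff E U \<inter> Za)" by (auto simp: sdiff_def)
    then have "measure \<mu> (Psi -` E \<inter> Za) \<le> measure \<mu> ((Psi -` U \<inter> Za) \<union> (Psi -` sdiff E U \<inter> Za))"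
      by (intro P.finite_measure_mono sets.Un Psi_pre_sets Us sds)
    also have "\<dots> \<le> measure \<mu> (Psi -` U \<inter> Za) + measure \<mu> (Psi -` sdiff E U \<inter> Za)"
      by (intro measure_Un_le Psi_pre_sets Us sds)
    also have "measure \<mu> (Psi -` U \<inter> Za) \<le> K * measure \<mu> U"
      by (rule ratio[OF U' _ K KG]) auto
    also have "measure \<mu> U \<le> measure \<mu> E + measure \<mu> (sdiff E U)"
    proof -
      have "U \<subseteq> E \<union> sdiff E U" by (auto simp: sdiff_def)
      then have "measure \<mu> U \<le> measure \<mu> (E \<union> sdiff E U)" by (intro P.finite_measure_mono sets.Un E sds)
      also have "\<dots> \<le> measure \<mu> E + measure \<mu> (sdiff E U)" by (intro measure_Un_le E sds)
      finally show ?thesis .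
    qed
    finally have "measure \<mu> (Psi -` E \<inter> Za) \<le> K * (measure \<mu> E + measure \<mu> (sdiff E U)) + measure \<mu> (Psi -` sdiff E U \<inter> Za)"
      using K by (simp add: mult_left_mono)
    also have "\<dots> \<le> K * (measure \<mu> E + \<delta>) + \<delta>"
      using U(2,3) K by (intro add_mono mult_left_mono) auto
    also have "\<dots> = K * measure \<mu> E + (K + 1) * \<delta>" by (simp add: algebra_simps)
    also have "(K + 1) * \<delta> = \<epsilon>" using K by (simp add: \<delta>_def)
    finally show "measure \<mu> (Psi -` E \<inter> Za) \<le> K * measure \<mu> E + \<epsilon>" .
  qed
  then show ?thesis using K by blast
qed

end


lemma two_sided_gen:
  fixes q :: real assumes q: "0 \<le> q" "q < 1"
  shows "(\<Sum>i<n. q ^ nat \<bar>int i - int c\<bar>) \<le> 2 / (1 - q)"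
proof -
  let ?g = "\<lambda>i. q ^ nat \<bar>int i - int c\<bar>"
  have "(\<Sum>i<n. ?g i) \<le> (\<Sum>i<c+n. ?g i)" using q by (intro sum_mono2) auto
  also have "(\<Sum>i<c+n. ?g i) = (\<Sum>i<c. ?g i) + (\<Sum>i=c..<c+n. ?g i)"
  proof -
    have e: "{..<c+n} = {0..<c+n}" "{..<c} = {0..<c}" by auto
    have "sum ?g {0..<c} + sum ?g {c..<c+n} = sum ?g {0..<c+n}"
      by (rule sum.atLeastLessThan_concat) auto
    then show ?thesis by (simp only: e)
  qed
  also have "(\<Sum>i<c. ?g i) = (\<Sum>i<c. q ^ Suc i)"
  proof -
    have "(\<Sum>i<c. ?g i) = (\<Sum>i<c. (\<lambda>j. q ^ Suc j) (c - Suc i))"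
    proof (rule sum.cong)
      fix i assume "i \<in> {..<c}"
      then have "nat \<bar>int i - int c\<bar> = Suc (c - Suc i)" by auto
      then show "?g i = (\<lambda>j. q ^ Suc j) (c - Suc i)" by simp
    qed auto
    also have "\<dots> = (\<Sum>i<c. q ^ Suc i)" by (rule sum.nat_diff_reindex)
    finally show ?thesis .
  qed
  also have "(\<Sum>i=c..<c+n. ?g i) = (\<Sum>i<n. q ^ i)"
  proof -
    have "(\<Sum>i=c..<c+n. ?g i) = (\<Sum>i=0+c..<n+c. ?g i)" by (simp add: add.commute)
    also have "\<dots> = (\<Sum>i=0..<n. ?g (i + c))" by (rule sum.shift_bounds_nat_ivl)
    also have "\<dots> = (\<Sum>i<n. q ^ i)" by (simp add: lessThan_atLeast0)
    finally show ?thesis .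
  qed
  also have "(\<Sum>i<c. q ^ Suc i) + (\<Sum>i<n. q ^ i) \<le> 1 / (1 - q) + 1 / (1 - q)"
  proof (intro add_mono)
    have "(\<Sum>i<c. q ^ Suc i) = q * (\<Sum>i<c. q ^ i)" by (simp add: sum_distrib_left)
    also have "\<dots> \<le> 1 * (1 / (1 - q))" using geo_bound[OF q, of c] q
      by (intro mult_mono) (auto intro: sum_nonneg)
    finally show "(\<Sum>i<c. q ^ Suc i) \<le> 1 / (1 - q)" by simp
    show "(\<Sum>i<n. q ^ i) \<le> 1 / (1 - q)" by (rule geo_bound[OF q])
  qed
  finally show ?thesis by simp
qed

lemma tail_est:
  fixes \<theta> C :: real and N :: nat
  assumes th: "0 < \<theta>" "\<theta> < 1" and C: "C \<ge> 0" and e: "\<epsilon> > 0"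
  shows "\<exists>K0. \<forall>K\<ge>K0. \<forall>e::nat\<Rightarrow>real. (\<forall>i. i \<le> K \<longrightarrow> \<bar>e i\<bar> \<le> C * \<theta> ^ (K - i)) \<longrightarrow>
     (\<forall>i. N \<le> i \<longrightarrow> \<bar>e i\<bar> \<le> C * \<theta> ^ (i - N)) \<longrightarrow> (\<forall>n. \<bar>\<Sum>i<n. e i\<bar> \<le> \<epsilon>)"
proof -
  have "(\<lambda>J. \<theta> ^ J) \<longlonglongrightarrow> 0" using th by (intro LIMSEQ_power_zero) auto
  moreover have "\<epsilon> * (1 - \<theta>) / (2 * C + 1) > 0" using th C e by auto
  ultimately obtain J where J: "\<theta> ^ J < \<epsilon> * (1 - \<theta>) / (2 * C + 1)"
    unfolding LIMSEQ_def dist_real_def by (metis abs_of_nonneg diff_zero less_eq_real_def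
        order_refl th(1) zero_le_power)
  define T where "T = N + J"
  have key: "C * \<theta> ^ J * (2 / (1 - \<theta>)) \<le> \<epsilon>"
  proof -
    have x0: "\<theta> ^ J \<ge> 0" using th by auto
    have "\<theta> ^ J * (2 * C + 1) < \<epsilon> * (1 - \<theta>)"
      using J C by (simp add: pos_less_divide_eq add_pos_nonneg)
    moreover have "2 * C * \<theta> ^ J \<le> \<theta> ^ J * (2 * C + 1)" using x0 by (simp add: algebra_simps)
    ultimately have "2 * C * \<theta> ^ J \<le> \<epsilon> * (1 - \<theta>)" by linarith
    then have "2 * C * \<theta> ^ J / (1 - \<theta>) \<le> \<epsilon>" using th by (simp add: divide_le_eq)
    then show ?thesis by (simp add: field_simps)
  qed
  show ?thesis
  proof (intro exI[of _ "T + J"] allI impI)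
    fix K n and e :: "nat \<Rightarrow> real"
    assume K: "T + J \<le> K" and e1: "\<forall>i. i \<le> K \<longrightarrow> \<bar>e i\<bar> \<le> C * \<theta> ^ (K - i)"
      and e2: "\<forall>i. N \<le> i \<longrightarrow> \<bar>e i\<bar> \<le> C * \<theta> ^ (i - N)"
    have b: "\<bar>e i\<bar> \<le> C * \<theta> ^ J * \<theta> ^ nat \<bar>int i - int T\<bar>" for i
    proof (cases "i < T")
      case True
      have "\<bar>e i\<bar> \<le> C * \<theta> ^ (K - i)" using e1 True K by auto
      also have "\<theta> ^ (K - i) \<le> \<theta> ^ (J + nat \<bar>int i - int T\<bar>)"
        using th True K by (intro power_decreasing) auto
      finally show ?thesis using C by (simp add: power_add mult.assoc mult_left_mono)
    next
      case False
      then have eq: "i - N = J + nat \<bar>int i - int T\<bar>" by (auto simp: T_def)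
      have "N \<le> i" using False by (auto simp: T_def)
      then have "\<bar>e i\<bar> \<le> C * \<theta> ^ (i - N)" using e2 by auto
      then show ?thesis unfolding eq by (simp add: power_add mult.assoc)
    qed
    have "\<bar>\<Sum>i<n. e i\<bar> \<le> (\<Sum>i<n. \<bar>e i\<bar>)" by (rule sum_abs)
    also have "\<dots> \<le> (\<Sum>i<n. C * \<theta> ^ J * \<theta> ^ nat \<bar>int i - int T\<bar>)" by (intro sum_mono b)
    also have "\<dots> = C * \<theta> ^ J * (\<Sum>i<n. \<theta> ^ nat \<bar>int i - int T\<bar>)" by (simp add: sum_distrib_left)
    also have "\<dots> \<le> C * \<theta> ^ J * (2 / (1 - \<theta>))"
      using two_sided_gen[where q=\<theta> and n=n and c=T] th C by (intro mult_left_mono) auto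
    also have "\<dots> \<le> \<epsilon>" by (rule key)
    finally show "\<bar>\<Sum>i<n. e i\<bar> \<le> \<epsilon>" .
  qed
qed

context skew begin

definition "Fs n x y = birkhoff f n x - birkhoff f n y"
definition "Pu n x y = birkhoff f n (shiftn (- int n) y) - birkhoff f n (shiftn (- int n) x)"
definition "Gd n x y = (birkhoff f n x + birkhoff f n (shiftn (- int n) x)) - (birkhoff f n y + birkhoff f n (shiftn (- int n) y))"

lemma Fs_Pu_Gd: "Fs n x y - Pu n x y = Gd n x y"
  by (simp add: Fs_def Pu_def Gd_def)

lemma birkhoff_past: "birkhoff f n (shiftn (- int n) x) = (\<Sum>i<n. f (shiftn (- int i - 1) x))"
proof -
  have "birkhoff f n (shiftn (- int n) x) = (\<Sum>i<n. (\<lambda>j. f (shiftn (- int j - 1) x)) (n - Suc i))"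
    unfolding birkhoff_alt by (rule sum.cong) (auto simp: of_nat_diff)
  also have "\<dots> = (\<Sum>i<n. f (shiftn (- int i - 1) x))" by (rule sum.nat_diff_reindex)
  finally show ?thesis .
qed

lemma fut_est:
  assumes e: "\<epsilon> > 0"
  shows "\<exists>K0. \<forall>K\<ge>K0. \<forall>a b a' b'. a \<in> S \<longrightarrow> b \<in> S \<longrightarrow> a' \<in> S \<longrightarrow> b' \<in> S \<longrightarrow>
    (\<forall>i. \<bar>i\<bar> \<le> int K \<longrightarrow> a' i = a i) \<longrightarrow> (\<forall>i. \<bar>i\<bar> \<le> int K \<longrightarrow> b' i = b i) \<longrightarrow>
    (\<forall>i. int N \<le> i \<longrightarrow> a i = b i) \<longrightarrow> (\<forall>i. int N \<le> i \<longrightarrow> a' i = b' i) \<longrightarrow>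
    (\<forall>n. \<bar>Fs n a' b' - Fs n a b\<bar> \<le> \<epsilon>)"
proof -
  obtain K0 where K0: "\<forall>K\<ge>K0. \<forall>e::nat\<Rightarrow>real. (\<forall>i. i \<le> K \<longrightarrow> \<bar>e i\<bar> \<le> (2 * Cf) * \<theta> ^ (K - i)) \<longrightarrow>
     (\<forall>i. N \<le> i \<longrightarrow> \<bar>e i\<bar> \<le> (2 * Cf) * \<theta> ^ (i - N)) \<longrightarrow> (\<forall>n. \<bar>\<Sum>i<n. e i\<bar> \<le> \<epsilon>)"
    using tail_est[of \<theta> "2 * Cf" \<epsilon> N] th0 th1 Cf_nonneg e by auto
  show ?thesis
  proof (intro exI[of _ K0] allI impI)
    fix K a b a' b' n
    assume K: "K0 \<le> K" and S: "a \<in> S" "b \<in> S" "a' \<in> S" "b' \<in> S"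
      and ag: "\<forall>i. \<bar>i\<bar> \<le> int K \<longrightarrow> a' i = a i" and bg: "\<forall>i. \<bar>i\<bar> \<le> int K \<longrightarrow> b' i = b i"
      and ab: "\<forall>i. int N \<le> i \<longrightarrow> a i = b i" and ab': "\<forall>i. int N \<le> i \<longrightarrow> a' i = b' i"
    define e where "e i = (f (shiftn (int i) a') - f (shiftn (int i) b')) - (f (shiftn (int i) a) - f (shiftn (int i) b))" for i
    have e1: "\<bar>e i\<bar> \<le> (2 * Cf) * \<theta> ^ (K - i)" if "i \<le> K" for i
    proof -
      have "\<forall>j. \<bar>j\<bar> < int (K - i) \<longrightarrow> a' (j + int i) = a (j + int i)" using ag that by auto
      then have 1: "\<bar>f (shiftn (int i) a') - f (shiftn (int i) a)\<bar> \<le> Cf * \<theta> ^ (K - i)"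
        using lip_shift S by blast
      have "\<forall>j. \<bar>j\<bar> < int (K - i) \<longrightarrow> b' (j + int i) = b (j + int i)" using bg that by auto
      then have 2: "\<bar>f (shiftn (int i) b') - f (shiftn (int i) b)\<bar> \<le> Cf * \<theta> ^ (K - i)"
        using lip_shift S by blast
      show ?thesis using 1 2 unfolding e_def by linarith
    qed
    have e2: "\<bar>e i\<bar> \<le> (2 * Cf) * \<theta> ^ (i - N)" if "N \<le> i" for i
    proof -
      have "\<forall>j. \<bar>j\<bar> < int (i - N) \<longrightarrow> a' (j + int i) = b' (j + int i)" using ab' that by auto
      then have 1: "\<bar>f (shiftn (int i) a') - f (shiftn (int i) b')\<bar> \<le> Cf * \<theta> ^ (i - N)"
        using lip_shift S by blast
      have "\<forall>j. \<bar>j\<bar> < int (i - N) \<longrightarrow> a (j + int i) = b (j + int i)" using ab that by auto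
      then have 2: "\<bar>f (shiftn (int i) a) - f (shiftn (int i) b)\<bar> \<le> Cf * \<theta> ^ (i - N)"
        using lip_shift S by blast
      show ?thesis using 1 2 unfolding e_def by linarith
    qed
    have "Fs n a' b' - Fs n a b = (\<Sum>i<n. e i)"
      by (simp add: Fs_def birkhoff_alt e_def sum_subtractf)
    then show "\<bar>Fs n a' b' - Fs n a b\<bar> \<le> \<epsilon>" using K0 K e1 e2 by auto
  qed
qed

lemma past_est:
  assumes e: "\<epsilon> > 0"
  shows "\<exists>K0. \<forall>K\<ge>K0. \<forall>a b a' b'. a \<in> S \<longrightarrow> b \<in> S \<longrightarrow> a' \<in> S \<longrightarrow> b' \<in> S \<longrightarrow>
    (\<forall>i. \<bar>i\<bar> \<le> int K \<longrightarrow> a' i = a i) \<longrightarrow> (\<forall>i. \<bar>i\<bar> \<le> int K \<longrightarrow> b' i = b i) \<longrightarrow>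
    (\<forall>i. i \<le> - int N \<longrightarrow> a i = b i) \<longrightarrow> (\<forall>i. i \<le> - int N \<longrightarrow> a' i = b' i) \<longrightarrow>
    (\<forall>n. \<bar>Pu n a' b' - Pu n a b\<bar> \<le> \<epsilon>)"
proof -
  obtain K0 where K0: "\<forall>K\<ge>K0. \<forall>e::nat\<Rightarrow>real. (\<forall>i. i \<le> K \<longrightarrow> \<bar>e i\<bar> \<le> (2 * Cf) * \<theta> ^ (K - i)) \<longrightarrow>
     (\<forall>i. N \<le> i \<longrightarrow> \<bar>e i\<bar> \<le> (2 * Cf) * \<theta> ^ (i - N)) \<longrightarrow> (\<forall>n. \<bar>\<Sum>i<n. e i\<bar> \<le> \<epsilon>)"
    using tail_est[of \<theta> "2 * Cf" \<epsilon> N] th0 th1 Cf_nonneg e by auto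
  show ?thesis
  proof (intro exI[of _ K0] allI impI)
    fix K a b a' b' n
    assume K: "K0 \<le> K" and S: "a \<in> S" "b \<in> S" "a' \<in> S" "b' \<in> S"
      and ag: "\<forall>i. \<bar>i\<bar> \<le> int K \<longrightarrow> a' i = a i" and bg: "\<forall>i. \<bar>i\<bar> \<le> int K \<longrightarrow> b' i = b i"
      and ab: "\<forall>i. i \<le> - int N \<longrightarrow> a i = b i" and ab': "\<forall>i. i \<le> - int N \<longrightarrow> a' i = b' i"
    define e where "e i = (f (shiftn (- int i - 1) b') - f (shiftn (- int i - 1) a')) - (f (shiftn (- int i - 1) b) - f (shiftn (- int i - 1) a))" for i
    have e1: "\<bar>e i\<bar> \<le> (2 * Cf) * \<theta> ^ (K - i)" if "i \<le> K" for i
    proof -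
      have "\<forall>j. \<bar>j\<bar> < int (K - i) \<longrightarrow> a' (j + (- int i - 1)) = a (j + (- int i - 1))" using ag that by auto
      then have 1: "\<bar>f (shiftn (- int i - 1) a') - f (shiftn (- int i - 1) a)\<bar> \<le> Cf * \<theta> ^ (K - i)"
        using lip_shift S by blast
      have "\<forall>j. \<bar>j\<bar> < int (K - i) \<longrightarrow> b' (j + (- int i - 1)) = b (j + (- int i - 1))" using bg that by auto
      then have 2: "\<bar>f (shiftn (- int i - 1) b') - f (shiftn (- int i - 1) b)\<bar> \<le> Cf * \<theta> ^ (K - i)"
        using lip_shift S by blast
      show ?thesis using 1 2 unfolding e_def by linarith
    qed
    have e2: "\<bar>e i\<bar> \<le> (2 * Cf) * \<theta> ^ (i - N)" if "N \<le> i" for i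
    proof -
      have "\<forall>j. \<bar>j\<bar> < int (i - N) \<longrightarrow> a' (j + (- int i - 1)) = b' (j + (- int i - 1))" using ab' that by auto
      then have 1: "\<bar>f (shiftn (- int i - 1) a') - f (shiftn (- int i - 1) b')\<bar> \<le> Cf * \<theta> ^ (i - N)"
        using lip_shift S by blast
      have "\<forall>j. \<bar>j\<bar> < int (i - N) \<longrightarrow> a (j + (- int i - 1)) = b (j + (- int i - 1))" using ab that by auto
      then have 2: "\<bar>f (shiftn (- int i - 1) a) - f (shiftn (- int i - 1) b)\<bar> \<le> Cf * \<theta> ^ (i - N)"
        using lip_shift S by blast
      show ?thesis using 1 2 unfolding e_def by linarith
    qed
    have "Pu n a' b' - Pu n a b = (\<Sum>i<n. e i)"
      by (simp add: Pu_def birkhoff_past e_def sum_subtractf)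
    then show "\<bar>Pu n a' b' - Pu n a b\<bar> \<le> \<epsilon>" using K0 K e1 e2 by auto
  qed
qed

end


context skew begin

lemma null_of_measure: "N \<in> sets \<mu> \<Longrightarrow> measure \<mu> N = 0 \<Longrightarrow> N \<in> null_sets \<mu>"
  by (simp add: P.emeasure_eq_measure null_setsI)

lemma AE_shift:
  assumes "AE x in \<mu>. P x" shows "AE z in \<mu>. P (shiftn j z)"
proof -
  obtain N where N: "{x \<in> space \<mu>. \<not> P x} \<subseteq> N" "emeasure \<mu> N = 0" "N \<in> sets \<mu>"
    using assms by (rule AE_E)
  have "measure \<mu> (shiftn j -` N \<inter> S) = 0" using mp[OF N(3)] N(2) by (simp add: measure_def)
  then have "shiftn j -` N \<inter> S \<in> null_sets \<mu>" using shiftn_pre_sets[OF N(3)] null_of_measure by auto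
  moreover have "{z \<in> space \<mu>. \<not> P (shiftn j z)} \<subseteq> shiftn j -` N \<inter> S"
  proof
    fix z assume z: "z \<in> {z \<in> space \<mu>. \<not> P (shiftn j z)}"
    then have "shiftn j z \<in> {x \<in> space \<mu>. \<not> P x}" using space_mu SFT_shiftn by auto
    then show "z \<in> shiftn j -` N \<inter> S" using N(1) z space_mu by auto
  qed
  ultimately show ?thesis by (rule AE_I')
qed

lemma cyl_pos: "x \<in> S \<Longrightarrow> measure \<mu> (cyl S (- int m) (int m) x) > 0"
proof -
  assume x: "x \<in> S"
  obtain \<phi> P c1 c2 q C where c: "0 < c1" and
    G: "\<forall>x\<in>S. \<forall>n\<ge>1.
           c1 * exp (- real n * P + birkhoff \<phi> n x) \<le> measure \<mu> (cyl S 0 (int n - 1) x) \<and>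
           measure \<mu> (cyl S 0 (int n - 1) x) \<le> c2 * exp (- real n * P + birkhoff \<phi> n x)"
    using gibbs_data by blast
  define u where "u = shiftn (- int m) x"
  have u: "u \<in> S" using x by (simp add: u_def SFT_shiftn)
  have e: "int (2 * m + 1) - 1 = 2 * int m" by simp
  have H: "\<forall>n\<ge>1. c1 * exp (- real n * P + birkhoff \<phi> n u) \<le> measure \<mu> (cyl S 0 (int n - 1) u) \<and>
           measure \<mu> (cyl S 0 (int n - 1) u) \<le> c2 * exp (- real n * P + birkhoff \<phi> n u)"
    using G u by blast
  have "c1 * exp (- real (2*m+1) * P + birkhoff \<phi> (2*m+1) u) \<le> measure \<mu> (cyl S 0 (int (2*m+1) - 1) u)"
    using conjunct1[OF H[rule_format, of "2*m+1", OF le_add2]] .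
  moreover have "c1 * exp (- real (2*m+1) * P + birkhoff \<phi> (2*m+1) u) > 0" using c by simp
  ultimately show ?thesis by (simp only: cyl_shift_measure u_def e)
qed

end

locale cob = skew +
  fixes w :: "seq \<Rightarrow> real"
  assumes wm: "w \<in> borel_measurable \<mu>"
    and cobd: "AE x in \<mu>. f x = w (shift x) - w x"
begin

definition "Qc z \<longleftrightarrow> (\<forall>i::int. f (shiftn i z) = w (shiftn (i + 1) z) - w (shiftn i z))"

lemma AE_Qc: "AE z in \<mu>. Qc z"
  unfolding Qc_def AE_all_countable
proof
  fix i :: int
  show "AE z in \<mu>. f (shiftn i z) = w (shiftn (i + 1) z) - w (shiftn i z)"
    using AE_shift[OF cobd, of i] by (simp add: shift_eq add.commute)
qed

lemma Qc_tele:
  assumes "Qc z"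
  shows "birkhoff f n z + birkhoff f n (shiftn (- int n) z) = w (shiftn (int n) z) - w (shiftn (- int n) z)"
proof -
  have "birkhoff f n z = (\<Sum>i<n. w (shiftn (int (Suc i)) z) - w (shiftn (int i) z))"
    unfolding birkhoff_alt using assms by (intro sum.cong) (auto simp: Qc_def add.commute)
  also have "\<dots> = w (shiftn (int n) z) - w z" by (subst sum_lessThan_telescope) simp
  finally have 1: "birkhoff f n z = w (shiftn (int n) z) - w z" .
  have "birkhoff f n (shiftn (- int n) z) = (\<Sum>i<n. w (shiftn (int (Suc i) - int n) z) - w (shiftn (int i - int n) z))"
    unfolding birkhoff_alt using assms by (intro sum.cong) (auto simp: Qc_def algebra_simps)
  also have "\<dots> = w z - w (shiftn (- int n) z)" by (subst sum_lessThan_telescope) simp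
  finally show ?thesis using 1 by simp
qed

end

sublocale cob \<subseteq> skew ..

locale cob_swap = cob + swap_setup
begin

lemma AE_Psi:
  assumes "AE x in \<mu>. P x" shows "AE z in \<mu>. z \<in> Za \<longrightarrow> P (Psi z)"
proof -
  obtain K where K: "K > 0" "\<forall>E\<in>sets \<mu>. measure \<mu> (Psi -` E \<inter> Za) \<le> K * measure \<mu> E"
    using nonsing by blast
  obtain N where N: "{x \<in> space \<mu>. \<not> P x} \<subseteq> N" "emeasure \<mu> N = 0" "N \<in> sets \<mu>"
    using assms by (rule AE_E)
  have "measure \<mu> N = 0" using N(2) by (simp add: measure_def)
  then have "measure \<mu> (Psi -` N \<inter> Za) \<le> 0" using K N(3) by auto
  then have "measure \<mu> (Psi -` N \<inter> Za) = 0" by (simp add: measure_le_0_iff)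
  then have "Psi -` N \<inter> Za \<in> null_sets \<mu>" using Psi_pre_sets[OF N(3)] null_of_measure by auto
  moreover have "{z \<in> space \<mu>. \<not> (z \<in> Za \<longrightarrow> P (Psi z))} \<subseteq> Psi -` N \<inter> Za"
  proof
    fix z assume z: "z \<in> {z \<in> space \<mu>. \<not> (z \<in> Za \<longrightarrow> P (Psi z))}"
    then have "Psi z \<in> {x \<in> space \<mu>. \<not> P x}" using space_mu Psi_S by auto
    then show "z \<in> Psi -` N \<inter> Za" using N(1) z by auto
  qed
  ultimately show ?thesis by (rule AE_I')
qed

end


context cob begin

lemma wpre_sets: "w -` {c..<d} \<inter> S \<in> sets \<mu>"
  using measurable_sets[OF wm atLeastLessThan_borel, of c d] space_mu by simp

lemma good_partition:
  assumes d: "\<delta> > 0" and h: "\<eta> > 0"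
  shows "\<exists>Bad m. Bad \<in> sets \<mu> \<and> measure \<mu> Bad \<le> 2 * \<eta> \<and>
    (\<forall>y\<in>S. \<forall>y'\<in>S. y \<notin> Bad \<longrightarrow> y' \<notin> Bad \<longrightarrow> (\<forall>i. \<bar>i\<bar> \<le> int m \<longrightarrow> y i = y' i) \<longrightarrow> \<bar>w y - w y'\<bar> < \<delta>)"
proof -
  define Out where "Out J = S - (w -` {- real J * \<delta>..<real J * \<delta>} \<inter> S)" for J :: nat
  have Outs: "Out J \<in> sets \<mu>" for J unfolding Out_def using wpre_sets space_mu by (metis sets.compl_sets)
  have dec: "decseq Out"
  proof (rule decseq_SucI)
    fix J
    have "{- real J * \<delta>..<real J * \<delta>} \<subseteq> {- real (Suc J) * \<delta>..<real (Suc J) * \<delta>}"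
      using d by (auto simp: algebra_simps)
    then show "Out (Suc J) \<subseteq> Out J" unfolding Out_def by auto
  qed
  have inter: "(\<Inter>J. Out J) = {}"
  proof -
    have notout: "x \<notin> Out J" if "x \<in> S" "\<bar>w x\<bar> / \<delta> < real J" for x J
    proof -
      have "\<bar>w x\<bar> < real J * \<delta>" using that d by (simp add: divide_less_eq)
      then show ?thesis using that unfolding Out_def by auto
    qed
    show ?thesis
    proof (rule equals0I)
      fix x assume "x \<in> (\<Inter>J. Out J)"
      then have x: "x \<in> S" "\<And>J. x \<in> Out J" unfolding Out_def by auto
      obtain J where "\<bar>w x\<bar> / \<delta> < real J" using reals_Archimedean2 by blast
      then show False using notout x by blast
    qed
  qed
  have "(\<lambda>J. measure \<mu> (Out J)) \<longlonglongrightarrow> measure \<mu> (\<Inter>J. Out J)"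
    using Outs dec by (intro P.finite_Lim_measure_decseq) auto
  then have "(\<lambda>J. measure \<mu> (Out J)) \<longlonglongrightarrow> 0" using inter by simp
  then obtain J where J: "measure \<mu> (Out J) < \<eta>"
  proof -
    assume r: "\<And>J. measure \<mu> (Out J) < \<eta> \<Longrightarrow> thesis"
    obtain no where "\<forall>n\<ge>no. norm (measure \<mu> (Out n) - 0) < \<eta>"
      using LIMSEQ_D[OF \<open>(\<lambda>J. measure \<mu> (Out J)) \<longlonglongrightarrow> 0\<close> h] by blast
    then have "measure \<mu> (Out no) < \<eta>" by auto
    then show thesis by (rule r)
  qed
  define JS where "JS = {- int J..<int J}"
  have finJS: "finite JS" by (simp add: JS_def)
  define B where "B j = w -` {real_of_int j * \<delta>..<(real_of_int j + 1) * \<delta>} \<inter> S" for j :: int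
  have Bs: "B j \<in> sets \<mu>" for j unfolding B_def by (rule wpre_sets)
  define \<eta>' where "\<eta>' = \<eta> / (real (card JS) + 1)"
  have h': "\<eta>' > 0" using h by (simp add: \<eta>'_def add_pos_nonneg)
  have "\<forall>j. \<exists>Um. windowed (snd Um) (fst Um) \<and> measure \<mu> (sdiff (B j) (fst Um)) < \<eta>'"
  proof
    fix j
    obtain U m where "windowed m U" "measure \<mu> (sdiff (B j) U) < \<eta>'"
      using approx[OF measurable_ident sets.top Bs] h' by blast
    then show "\<exists>Um. windowed (snd Um) (fst Um) \<and> measure \<mu> (sdiff (B j) (fst Um)) < \<eta>'"
      by (intro exI[of _ "(U, m)"]) auto
  qed
  then obtain Um where Um: "\<And>j. windowed (snd (Um j)) (fst (Um j))"
    "\<And>j. measure \<mu> (sdiff (B j) (fst (Um j))) < \<eta>'" by metis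
  define m where "m = (\<Sum>j\<in>JS. snd (Um j))"
  have Uw: "windowed m (fst (Um j))" if "j \<in> JS" for j
    using Um(1)[of j] windowed_mono member_le_sum[of j JS "\<lambda>j. snd (Um j)"] that finJS
    by (auto simp: m_def)
  have Us: "fst (Um j) \<in> sets \<mu>" for j using Um(1) windowed_sets by blast
  have sds: "sdiff (B j) (fst (Um j)) \<in> sets \<mu>" for j using Bs Us by (auto simp: sdiff_def)
  define Bad where "Bad = Out J \<union> (\<Union>j\<in>JS. sdiff (B j) (fst (Um j)))"
  have Bads: "Bad \<in> sets \<mu>" unfolding Bad_def using Outs sds finJS by auto
  have "measure \<mu> Bad \<le> measure \<mu> (Out J) + measure \<mu> (\<Union>j\<in>JS. sdiff (B j) (fst (Um j)))"
    unfolding Bad_def using Outs sds finJS by (intro measure_Un_le) auto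
  also have "measure \<mu> (\<Union>j\<in>JS. sdiff (B j) (fst (Um j))) \<le> (\<Sum>j\<in>JS. measure \<mu> (sdiff (B j) (fst (Um j))))"
    using sds finJS by (intro measure_UNION_le) auto
  also have "\<dots> \<le> (\<Sum>j\<in>JS. \<eta>')" using Um(2) by (intro sum_mono) (auto intro: less_imp_le)
  also have "\<dots> \<le> \<eta>" using h by (simp add: \<eta>'_def field_simps)
  finally have mB: "measure \<mu> Bad \<le> 2 * \<eta>" using J by linarith
  have close: "\<bar>w y - w y'\<bar> < \<delta>"
    if y: "y \<in> S" "y' \<in> S" "y \<notin> Bad" "y' \<notin> Bad" "\<forall>i. \<bar>i\<bar> \<le> int m \<longrightarrow> y i = y' i" for y y'
  proof -
    have "y \<notin> Out J" using y by (auto simp: Bad_def)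
    then have wy: "- real J * \<delta> \<le> w y" "w y < real J * \<delta>" using y unfolding Out_def by auto
    define j where "j = \<lfloor>w y / \<delta>\<rfloor>"
    have j1: "real_of_int j \<le> w y / \<delta>" "w y / \<delta> < real_of_int j + 1" unfolding j_def by linarith+
    then have j2: "real_of_int j * \<delta> \<le> w y" "w y < (real_of_int j + 1) * \<delta>"
      using d by (simp_all add: le_divide_eq divide_less_eq)
    have "- real J \<le> w y / \<delta>" "w y / \<delta> < real J" using wy d by (simp_all add: le_divide_eq divide_less_eq)
    then have "- int J \<le> j" "j < int J" unfolding j_def by (simp_all add: le_floor_iff floor_less_iff)
    then have jJ: "j \<in> JS" unfolding JS_def by auto
    have yB: "y \<in> B j" using j2 y by (auto simp: B_def)
    have "y \<notin> sdiff (B j) (fst (Um j))" using y jJ by (auto simp: Bad_def)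
    then have "y \<in> fst (Um j)" using yB by (auto simp: sdiff_def)
    moreover have W: "\<forall>x\<in>fst (Um j). \<forall>z\<in>S. (\<forall>i. \<bar>i\<bar> \<le> int m \<longrightarrow> x i = z i) \<longrightarrow> z \<in> fst (Um j)"
      using Uw[OF jJ] unfolding windowed_def by (rule conjunct2)
    ultimately have "y' \<in> fst (Um j)" using y(2,5) by blast
    moreover have "y' \<notin> sdiff (B j) (fst (Um j))" using y jJ by (auto simp: Bad_def)
    ultimately have "y' \<in> B j" by (auto simp: sdiff_def)
    then have "real_of_int j * \<delta> \<le> w y'" "w y' < (real_of_int j + 1) * \<delta>" by (auto simp: B_def)
    then show ?thesis using j2 by (simp add: algebra_simps abs_less_iff)
  qed
  show ?thesis using Bads mB close by blast
qed

end


context cob begin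

lemma hom_zero:
  assumes aS: "a \<in> S" and bS: "b \<in> S" and hom: "\<forall>i. \<bar>i\<bar> > int L \<longrightarrow> a i = b i"
  shows "(\<lambda>n. Gd n a b) \<longlonglongrightarrow> 0"
proof (rule ccontr)
  assume nc: "\<not> (\<lambda>n. Gd n a b) \<longlonglongrightarrow> 0"
  obtain \<epsilon> where e: "\<epsilon> > 0" and fr: "\<forall>N. \<exists>n\<ge>N. \<bar>Gd n a b\<bar> \<ge> \<epsilon>"
    using nc unfolding LIMSEQ_def dist_real_def by (auto simp: not_less)
  have e4: "\<epsilon> / 4 > 0" using e by simp
  obtain K1 where K1: "\<forall>K\<ge>K1. \<forall>a b a' b'. a \<in> S \<longrightarrow> b \<in> S \<longrightarrow> a' \<in> S \<longrightarrow> b' \<in> S \<longrightarrow>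
    (\<forall>i. \<bar>i\<bar> \<le> int K \<longrightarrow> a' i = a i) \<longrightarrow> (\<forall>i. \<bar>i\<bar> \<le> int K \<longrightarrow> b' i = b i) \<longrightarrow>
    (\<forall>i. int (L+1) \<le> i \<longrightarrow> a i = b i) \<longrightarrow> (\<forall>i. int (L+1) \<le> i \<longrightarrow> a' i = b' i) \<longrightarrow>
    (\<forall>n. \<bar>Fs n a' b' - Fs n a b\<bar> \<le> \<epsilon>/4)"
    using fut_est[OF e4, of "L+1"] by blast
  obtain K2 where K2: "\<forall>K\<ge>K2. \<forall>a b a' b'. a \<in> S \<longrightarrow> b \<in> S \<longrightarrow> a' \<in> S \<longrightarrow> b' \<in> S \<longrightarrow>
    (\<forall>i. \<bar>i\<bar> \<le> int K \<longrightarrow> a' i = a i) \<longrightarrow> (\<forall>i. \<bar>i\<bar> \<le> int K \<longrightarrow> b' i = b i) \<longrightarrow>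
    (\<forall>i. i \<le> - int (L+1) \<longrightarrow> a i = b i) \<longrightarrow> (\<forall>i. i \<le> - int (L+1) \<longrightarrow> a' i = b' i) \<longrightarrow>
    (\<forall>n. \<bar>Pu n a' b' - Pu n a b\<bar> \<le> \<epsilon>/4)"
    using past_est[OF e4, of "L+1"] by blast
  define L' where "L' = max (L + 1) (max K1 K2)"
  interpret cs: cob_swap k A \<mu> \<theta> f w a b L L'
    by unfold_locales (use aS bS hom in \<open>auto simp: L'_def\<close>)
  have ZaS: "cs.Za \<subseteq> S" by (auto simp: cs.Za_def cyl_def)
  have unif: "\<bar>Gd n z (cs.Psi z) - Gd n a b\<bar> \<le> \<epsilon>/2" if z: "z \<in> cs.Za" for z n
  proof -
    have zS: "z \<in> S" using z ZaS by auto
    have PzS: "cs.Psi z \<in> S" using cs.Psi_S zS by auto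
    have za: "\<forall>i. \<bar>i\<bar> \<le> int L' \<longrightarrow> z i = a i" using z by (auto simp: cs.Za_def cyl_def abs_le_iff)
    have Pz: "cs.Psi z i = (if \<bar>i\<bar> \<le> int L then b i else z i)" for i
      using z by (simp add: cs.Psi_def swp_def)
    have pb: "\<forall>i. \<bar>i\<bar> \<le> int L' \<longrightarrow> cs.Psi z i = b i" using za hom Pz by auto
    have zP1: "\<forall>i. int (L+1) \<le> i \<longrightarrow> z i = cs.Psi z i" using Pz by auto
    have zP2: "\<forall>i. i \<le> - int (L+1) \<longrightarrow> z i = cs.Psi z i" using Pz by auto
    have ab1: "\<forall>i. int (L+1) \<le> i \<longrightarrow> a i = b i" using hom by auto
    have ab2: "\<forall>i. i \<le> - int (L+1) \<longrightarrow> a i = b i" using hom by auto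
    have "\<bar>Fs n z (cs.Psi z) - Fs n a b\<bar> \<le> \<epsilon>/4"
      using K1[rule_format, of L' a b z "cs.Psi z"] aS bS zS PzS za pb ab1 zP1 by (auto simp: L'_def)
    moreover have "\<bar>Pu n z (cs.Psi z) - Pu n a b\<bar> \<le> \<epsilon>/4"
      using K2[rule_format, of L' a b z "cs.Psi z"] aS bS zS PzS za pb ab2 zP2 by (auto simp: L'_def)
    ultimately show ?thesis unfolding Fs_Pu_Gd[symmetric] by linarith
  qed
  have Zpos: "measure \<mu> cs.Za > 0" unfolding cs.Za_def by (rule cyl_pos[OF aS])
  obtain K where K: "K > 0" "\<forall>E\<in>sets \<mu>. measure \<mu> (cs.Psi -` E \<inter> cs.Za) \<le> K * measure \<mu> E"
    using cs.nonsing by blast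
  define \<eta> where "\<eta> = measure \<mu> cs.Za / (8 * (1 + K))"
  have h: "\<eta> > 0" using Zpos K by (simp add: \<eta>_def)
  obtain Bad m where Bad: "Bad \<in> sets \<mu>" "measure \<mu> Bad \<le> 2 * \<eta>"
    "\<forall>y\<in>S. \<forall>y'\<in>S. y \<notin> Bad \<longrightarrow> y' \<notin> Bad \<longrightarrow> (\<forall>i. \<bar>i\<bar> \<le> int m \<longrightarrow> y i = y' i) \<longrightarrow> \<bar>w y - w y'\<bar> < \<epsilon>/8"
    using good_partition[of "\<epsilon>/8" \<eta>] e h by auto
  obtain n where n: "n \<ge> m + L + 1" "\<bar>Gd n a b\<bar> \<ge> \<epsilon>" using fr by blast
  have big: "\<bar>Gd n z (cs.Psi z)\<bar> \<ge> \<epsilon>/2" if "z \<in> cs.Za" for z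
    using unif[OF that, of n] n(2) by linarith
  have "AE z in \<mu>. Qc z \<and> (z \<in> cs.Za \<longrightarrow> Qc (cs.Psi z))"
    using AE_Qc cs.AE_Psi[OF AE_Qc] by eventually_elim auto
  then obtain N0 where N0: "{z \<in> space \<mu>. \<not> (Qc z \<and> (z \<in> cs.Za \<longrightarrow> Qc (cs.Psi z)))} \<subseteq> N0"
    "emeasure \<mu> N0 = 0" "N0 \<in> sets \<mu>" by (rule AE_E)
  have mN0: "measure \<mu> N0 = 0" using N0(2) by (simp add: measure_def)
  define E1 where "E1 = shiftn (int n) -` Bad \<inter> S"
  define E3 where "E3 = shiftn (- int n) -` Bad \<inter> S"
  define E2 where "E2 = cs.Psi -` E1 \<inter> cs.Za"
  define E4 where "E4 = cs.Psi -` E3 \<inter> cs.Za"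
  have E1s: "E1 \<in> sets \<mu>" "E3 \<in> sets \<mu>" unfolding E1_def E3_def using shiftn_pre_sets Bad(1) by auto
  have E2s: "E2 \<in> sets \<mu>" "E4 \<in> sets \<mu>" unfolding E2_def E4_def using cs.Psi_pre_sets E1s by auto
  have mE1: "measure \<mu> E1 \<le> 2 * \<eta>" "measure \<mu> E3 \<le> 2 * \<eta>"
    unfolding E1_def E3_def using mp[OF Bad(1)] Bad(2) by auto
  have mE2: "measure \<mu> E2 \<le> K * (2 * \<eta>)" "measure \<mu> E4 \<le> K * (2 * \<eta>)"
  proof -
    have "measure \<mu> E2 \<le> K * measure \<mu> E1" unfolding E2_def using K E1s by auto
    also have "\<dots> \<le> K * (2 * \<eta>)" using mE1 K by (intro mult_left_mono) auto
    finally show "measure \<mu> E2 \<le> K * (2 * \<eta>)" .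
    have "measure \<mu> E4 \<le> K * measure \<mu> E3" unfolding E4_def using K E1s by auto
    also have "\<dots> \<le> K * (2 * \<eta>)" using mE1 K by (intro mult_left_mono) auto
    finally show "measure \<mu> E4 \<le> K * (2 * \<eta>)" .
  qed
  have cover: "cs.Za \<subseteq> N0 \<union> E1 \<union> E2 \<union> E3 \<union> E4"
  proof
    fix z assume z: "z \<in> cs.Za"
    show "z \<in> N0 \<union> E1 \<union> E2 \<union> E3 \<union> E4"
    proof (rule ccontr)
      assume nz: "z \<notin> N0 \<union> E1 \<union> E2 \<union> E3 \<union> E4"
      have zS: "z \<in> S" using z ZaS by auto
      have PzS: "cs.Psi z \<in> S" using cs.Psi_S zS by auto
      have Q: "Qc z" "Qc (cs.Psi z)" using nz N0(1) z zS space_mu by auto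
      have Pz: "cs.Psi z i = (if \<bar>i\<bar> \<le> int L then b i else z i)" for i
        using z by (simp add: cs.Psi_def swp_def)
      have c1: "\<bar>w (shiftn (int n) z) - w (shiftn (int n) (cs.Psi z))\<bar> < \<epsilon>/8"
      proof -
        have "shiftn (int n) z \<notin> Bad" using nz zS by (auto simp: E1_def)
        moreover have "shiftn (int n) (cs.Psi z) \<notin> Bad" using nz z PzS by (auto simp: E2_def E1_def)
        moreover have "\<forall>i. \<bar>i\<bar> \<le> int m \<longrightarrow> shiftn (int n) z i = shiftn (int n) (cs.Psi z) i"
          using n(1) by (auto simp: shiftn_apply Pz)
        ultimately show ?thesis using Bad(3) zS PzS SFT_shiftn by blast
      qed
      have c2: "\<bar>w (shiftn (- int n) z) - w (shiftn (- int n) (cs.Psi z))\<bar> < \<epsilon>/8"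
      proof -
        have "shiftn (- int n) z \<notin> Bad" using nz zS by (auto simp: E3_def)
        moreover have "shiftn (- int n) (cs.Psi z) \<notin> Bad" using nz z PzS by (auto simp: E4_def E3_def)
        moreover have "\<forall>i. \<bar>i\<bar> \<le> int m \<longrightarrow> shiftn (- int n) z i = shiftn (- int n) (cs.Psi z) i"
          using n(1) by (auto simp: shiftn_apply Pz)
        ultimately show ?thesis using Bad(3) zS PzS SFT_shiftn by blast
      qed
      have "Gd n z (cs.Psi z) = (w (shiftn (int n) z) - w (shiftn (- int n) z)) -
          (w (shiftn (int n) (cs.Psi z)) - w (shiftn (- int n) (cs.Psi z)))"
        unfolding Gd_def using Qc_tele[OF Q(1), of n] Qc_tele[OF Q(2), of n] by simp
      then have "Gd n z (cs.Psi z) = (w (shiftn (int n) z) - w (shiftn (int n) (cs.Psi z))) -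
          (w (shiftn (- int n) z) - w (shiftn (- int n) (cs.Psi z)))" by simp
      then have "\<bar>Gd n z (cs.Psi z)\<bar> \<le> \<bar>w (shiftn (int n) z) - w (shiftn (int n) (cs.Psi z))\<bar> +
          \<bar>w (shiftn (- int n) z) - w (shiftn (- int n) (cs.Psi z))\<bar>"
        by (simp only: abs_triangle_ineq4)
      then have "\<bar>Gd n z (cs.Psi z)\<bar> < \<epsilon>/4" using c1 c2 by linarith
      then show False using big[OF z] by linarith
    qed
  qed
  have "measure \<mu> cs.Za \<le> measure \<mu> (N0 \<union> E1 \<union> E2 \<union> E3 \<union> E4)"
    using cover N0(3) E1s E2s by (intro P.finite_measure_mono) auto
  also have "\<dots> \<le> measure \<mu> N0 + measure \<mu> E1 + measure \<mu> E2 + measure \<mu> E3 + measure \<mu> E4"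
  proof -
    have s1: "N0 \<union> E1 \<in> sets \<mu>" "N0 \<union> E1 \<union> E2 \<in> sets \<mu>" "N0 \<union> E1 \<union> E2 \<union> E3 \<in> sets \<mu>"
      using N0(3) E1s E2s by auto
    have "measure \<mu> (N0 \<union> E1 \<union> E2 \<union> E3 \<union> E4) \<le> measure \<mu> (N0 \<union> E1 \<union> E2 \<union> E3) + measure \<mu> E4"
      using s1 E2s by (intro measure_Un_le) auto
    moreover have "measure \<mu> (N0 \<union> E1 \<union> E2 \<union> E3) \<le> measure \<mu> (N0 \<union> E1 \<union> E2) + measure \<mu> E3"
      using s1 E1s by (intro measure_Un_le) auto
    moreover have "measure \<mu> (N0 \<union> E1 \<union> E2) \<le> measure \<mu> (N0 \<union> E1) + measure \<mu> E2"
      using s1 E2s by (intro measure_Un_le) auto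
    moreover have "measure \<mu> (N0 \<union> E1) \<le> measure \<mu> N0 + measure \<mu> E1"
      using N0(3) E1s by (intro measure_Un_le) auto
    ultimately show ?thesis by linarith
  qed
  also have "\<dots> \<le> 0 + 2 * \<eta> + K * (2 * \<eta>) + 2 * \<eta> + K * (2 * \<eta>)"
    using mN0 mE1 mE2 by linarith
  also have "\<dots> = 4 * (1 + K) * \<eta>" by (simp add: algebra_simps)
  also have "\<dots> = measure \<mu> cs.Za / 2"
  proof -
    have "1 + K \<noteq> 0" using K by auto
    then show ?thesis unfolding \<eta>_def by (simp add: field_split_simps)
  qed
  finally show False using Zpos by linarith
qed

end


context skew begin

lemma conn_exists: "\<exists>M\<ge>1. \<forall>x\<in>S. \<forall>y\<in>S. \<exists>z\<in>S. z 0 = x 0 \<and> z (int M) = y 0"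
proof -
  define Sym where "Sym = (\<lambda>x. x 0) ` S"
  have "Sym \<subseteq> {..<k}"
  proof
    fix s assume "s \<in> Sym"
    then obtain x where "x \<in> S" "s = x 0" by (auto simp: Sym_def)
    then show "s \<in> {..<k}" by (simp add: SFT_def)
  qed
  then have finSym: "finite Sym" by (rule finite_subset) auto
  have ex: "\<exists>N. \<forall>n\<ge>N. \<exists>z\<in>S. z 0 = x 0 \<and> z (int n) = y 0" if xy: "x \<in> S" "y \<in> S" for x y
  proof -
    have mx: "\<forall>x\<in>S. \<forall>y\<in>S. \<forall>m::int. \<exists>N::nat. \<forall>n\<ge>N.
        \<exists>z\<in>S. (\<forall>i. \<bar>i\<bar> \<le> m \<longrightarrow> z i = x i) \<and> (\<forall>i. \<bar>i\<bar> \<le> m \<longrightarrow> shiftn (int n) z i = y i)"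
      using mix unfolding topologically_mixing_def .
    obtain N where N: "\<forall>n\<ge>N. \<exists>z\<in>S. (\<forall>i. \<bar>i\<bar> \<le> 0 \<longrightarrow> z i = x i) \<and> (\<forall>i. \<bar>i\<bar> \<le> 0 \<longrightarrow> shiftn (int n) z i = y i)"
      using spec[OF bspec[OF bspec[OF mx xy(1)] xy(2)], of 0] by blast
    have "\<forall>n\<ge>N. \<exists>z\<in>S. z 0 = x 0 \<and> z (int n) = y 0"
    proof (intro allI impI)
      fix n assume "n \<ge> N"
      then obtain z where "z \<in> S" "\<forall>i. \<bar>i\<bar> \<le> 0 \<longrightarrow> z i = x i" "\<forall>i. \<bar>i\<bar> \<le> 0 \<longrightarrow> shiftn (int n) z i = y i"
        using N by blast
      then show "\<exists>z\<in>S. z 0 = x 0 \<and> z (int n) = y 0" by (auto simp: shiftn_apply)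
    qed
    then show ?thesis by blast
  qed
  define Np where "Np q = (SOME N. \<forall>n\<ge>N. \<exists>z\<in>S. z 0 = fst q \<and> z (int n) = snd q)" for q :: "nat \<times> nat"
  have Np: "\<forall>n\<ge>Np q. \<exists>z\<in>S. z 0 = fst q \<and> z (int n) = snd q" if qs: "q \<in> Sym \<times> Sym" for q
  proof -
    obtain x y where xy: "x \<in> S" "y \<in> S" "fst q = x 0" "snd q = y 0" using qs by (auto simp: Sym_def)
    show ?thesis unfolding Np_def using someI_ex[OF ex[OF xy(1,2)]] xy(3,4) by simp
  qed
  define M where "M = 1 + (\<Sum>q\<in>Sym \<times> Sym. Np q)"
  have "\<forall>x\<in>S. \<forall>y\<in>S. \<exists>z\<in>S. z 0 = x 0 \<and> z (int M) = y 0"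
  proof (intro ballI)
    fix x y assume xy: "x \<in> S" "y \<in> S"
    define q where "q = (x 0, y 0)"
    have q: "q \<in> Sym \<times> Sym" using xy by (auto simp: q_def Sym_def)
    have "Np q \<le> (\<Sum>q\<in>Sym \<times> Sym. Np q)" using q finSym by (intro member_le_sum) auto
    then have "Np q \<le> M" by (simp add: M_def)
    then show "\<exists>z\<in>S. z 0 = x 0 \<and> z (int M) = y 0" using Np[OF q] by (auto simp: q_def)
  qed
  then show ?thesis by (intro exI[of _ M]) (auto simp: M_def)
qed

definition glue :: "int \<Rightarrow> seq \<Rightarrow> seq \<Rightarrow> seq" where
  "glue c x y = (\<lambda>i. if i \<le> c then x i else y i)"

lemma glue_S:
  assumes "x \<in> S" "y \<in> S" "x c = y c" shows "glue c x y \<in> S"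
  unfolding SFT_def mem_Collect_eq
proof
  fix i
  have x: "x i < k \<and> A (x i) (x (i + 1))" and y: "y i < k \<and> A (y i) (y (i + 1))"
    using assms(1,2) by (auto simp: SFT_def)
  show "glue c x y i < k \<and> A (glue c x y i) (glue c x y (i + 1))"
  proof (cases "i \<le> c")
    case True
    show ?thesis
    proof (cases "i + 1 \<le> c")
      case True then show ?thesis using x \<open>i \<le> c\<close> by (auto simp: glue_def)
    next
      case False
      then have "i = c" using True by auto
      then show ?thesis using y x assms(3) False by (auto simp: glue_def)
    qed
  next
    case False then show ?thesis using y by (auto simp: glue_def)
  qed
qed

end

locale regz = cob +
  fixes p :: seq and M :: nat
  assumes pS: "p \<in> S" and M1: "M \<ge> 1"
    and conn: "\<forall>x\<in>S. \<forall>y\<in>S. \<exists>z\<in>S. z 0 = x 0 \<and> z (int M) = y 0"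
begin

lemma conn2: "x \<in> S \<Longrightarrow> y \<in> S \<Longrightarrow> \<exists>z. z \<in> S \<and> z 0 = x i \<and> z (int M) = y j"
  using conn[rule_format, OF SFT_shiftn[of x k A i] SFT_shiftn[of y k A j]] by (auto simp: shiftn_apply)

definition "cA K y = (SOME c. c \<in> S \<and> c 0 = p (- int K - int M) \<and> c (int M) = y (- int K))"
definition "cB K y = (SOME c. c \<in> S \<and> c 0 = y (int K) \<and> c (int M) = p (int K + int M))"

lemma cA: assumes y: "y \<in> S" shows "cA K y \<in> S \<and> cA K y 0 = p (- int K - int M) \<and> cA K y (int M) = y (- int K)"
proof -
  have "\<exists>c. c \<in> S \<and> c 0 = p (- int K - int M) \<and> c (int M) = y (- int K)" by (rule conn2[OF pS y])
  from someI_ex[OF this] show ?thesis unfolding cA_def .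
qed

lemma cB: assumes y: "y \<in> S" shows "cB K y \<in> S \<and> cB K y 0 = y (int K) \<and> cB K y (int M) = p (int K + int M)"
proof -
  have "\<exists>c. c \<in> S \<and> c 0 = y (int K) \<and> c (int M) = p (int K + int M)" by (rule conn2[OF y pS])
  from someI_ex[OF this] show ?thesis unfolding cB_def .
qed

definition "R K y = glue (- int K - int M) p (glue (- int K) (shiftn (int K + int M) (cA K y))
   (glue (int K) y (glue (int K + int M) (shiftn (- int K) (cB K y)) p)))"

lemma R_eq: "R K y i = (if i \<le> - int K - int M then p i else if i \<le> - int K then cA K y (i + int K + int M)
   else if i \<le> int K then y i else if i \<le> int K + int M then cB K y (i - int K) else p i)"
  by (simp add: R_def glue_def shiftn_apply add.assoc)

lemma R_S: assumes y: "y \<in> S" shows "R K y \<in> S"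
proof -
  note a = cA[OF y, of K] and b = cB[OF y, of K]
  define g1 where "g1 = glue (int K + int M) (shiftn (- int K) (cB K y)) p"
  have g1: "g1 \<in> S" unfolding g1_def using b pS by (intro glue_S SFT_shiftn) (auto simp: shiftn_apply)
  define g2 where "g2 = glue (int K) y g1"
  have g2: "g2 \<in> S" unfolding g2_def using g1 y b by (intro glue_S) (auto simp: g1_def glue_def shiftn_apply)
  define g3 where "g3 = glue (- int K) (shiftn (int K + int M) (cA K y)) g2"
  have g3: "g3 \<in> S" unfolding g3_def using g2 a
    by (intro glue_S SFT_shiftn) (auto simp: g2_def g1_def glue_def shiftn_apply)
  have "glue (- int K - int M) p g3 \<in> S" using g3 pS a
    by (intro glue_S) (auto simp: g3_def glue_def shiftn_apply)
  then show ?thesis by (simp add: R_def g1_def g2_def g3_def)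
qed

lemma R_mid: assumes y: "y \<in> S" and i: "\<bar>i\<bar> \<le> int K" shows "R K y i = y i"
proof (cases "i = - int K")
  case True
  then show ?thesis using cA[OF y, of K] M1 by (simp add: R_eq)
next
  case False
  then have "\<not> i \<le> - int K - int M" "\<not> i \<le> - int K" "i \<le> int K" using i M1 by auto
  then show ?thesis by (simp add: R_eq)
qed

lemma R_out: assumes "\<bar>i\<bar> > int K + int M" shows "R K y i = p i"
proof (cases "i \<le> - int K - int M")
  case True then show ?thesis by (simp add: R_eq)
next
  case False
  then have "\<not> i \<le> - int K" "\<not> i \<le> int K" "\<not> i \<le> int K + int M" using assms by auto
  then show ?thesis using False by (simp add: R_eq)
qed

lemma R_fut:
  assumes y: "y \<in> S" "y' \<in> S" and ag: "\<forall>i\<ge>N. y i = y' i" and N: "N \<le> int K"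
  shows "\<forall>i\<ge>N. R K y i = R K y' i"
proof (intro allI impI)
  fix i assume i: "N \<le> i"
  have b: "cB K y = cB K y'" using ag N unfolding cB_def by auto
  show "R K y i = R K y' i"
  proof (cases "N \<le> - int K")
    case True
    then have "cA K y = cA K y'" using ag unfolding cA_def by auto
    then show ?thesis using b ag i by (simp add: R_eq)
  next
    case False
    then show ?thesis using b ag i by (simp add: R_eq)
  qed
qed

lemma R_past:
  assumes y: "y \<in> S" "y' \<in> S" and ag: "\<forall>i\<le>N. y i = y' i" and N: "- int K \<le> N"
  shows "\<forall>i\<le>N. R K y i = R K y' i"
proof (intro allI impI)
  fix i assume i: "i \<le> N"
  have a: "cA K y = cA K y'" using ag N unfolding cA_def by auto
  show "R K y i = R K y' i"
  proof (cases "int K \<le> N")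
    case True
    then have "cB K y = cB K y'" using ag unfolding cB_def by auto
    then show ?thesis using a ag i by (simp add: R_eq)
  next
    case False
    then show ?thesis using a ag i by (simp add: R_eq)
  qed
qed

end


lemma tri: "\<bar>(a::real) - c\<bar> \<le> \<bar>a - b\<bar> + \<bar>b - c\<bar>"
  using abs_triangle_ineq[of "a - b" "b - c"] by simp

context regz begin

definition Inv :: "seq \<times> real \<Rightarrow> seq \<times> real \<Rightarrow> bool" where
  "Inv a b \<longleftrightarrow> (\<forall>\<epsilon>>0. \<exists>K0. \<forall>K\<ge>K0. \<exists>N0. \<forall>n\<ge>N0. \<bar>Fs n (R K (fst a)) (R K (fst b)) - (snd b - snd a)\<bar> \<le> \<epsilon>)"

lemma Inv_refl: "Inv a a"
  unfolding Inv_def by (auto simp: Fs_def)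

lemma Inv_trans:
  assumes ab: "Inv a b" and bc: "Inv b c" shows "Inv a c"
  unfolding Inv_def
proof (intro allI impI)
  fix \<epsilon> :: real assume e: "\<epsilon> > 0"
  then have e2: "\<epsilon>/2 > 0" by simp
  obtain K1 where K1: "\<forall>K\<ge>K1. \<exists>N0. \<forall>n\<ge>N0. \<bar>Fs n (R K (fst a)) (R K (fst b)) - (snd b - snd a)\<bar> \<le> \<epsilon>/2"
    using ab e2 unfolding Inv_def by blast
  obtain K2 where K2: "\<forall>K\<ge>K2. \<exists>N0. \<forall>n\<ge>N0. \<bar>Fs n (R K (fst b)) (R K (fst c)) - (snd c - snd b)\<bar> \<le> \<epsilon>/2"
    using bc e2 unfolding Inv_def by blast
  show "\<exists>K0. \<forall>K\<ge>K0. \<exists>N0. \<forall>n\<ge>N0. \<bar>Fs n (R K (fst a)) (R K (fst c)) - (snd c - snd a)\<bar> \<le> \<epsilon>"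
  proof (rule exI[of _ "max K1 K2"], intro allI impI)
    fix K assume K: "max K1 K2 \<le> K"
    obtain N1 where N1: "\<forall>n\<ge>N1. \<bar>Fs n (R K (fst a)) (R K (fst b)) - (snd b - snd a)\<bar> \<le> \<epsilon>/2"
      using K1 K by auto
    obtain N2 where N2: "\<forall>n\<ge>N2. \<bar>Fs n (R K (fst b)) (R K (fst c)) - (snd c - snd b)\<bar> \<le> \<epsilon>/2"
      using K2 K by auto
    show "\<exists>N0. \<forall>n\<ge>N0. \<bar>Fs n (R K (fst a)) (R K (fst c)) - (snd c - snd a)\<bar> \<le> \<epsilon>"
    proof (rule exI[of _ "max N1 N2"], intro allI impI)
      fix n assume n: "max N1 N2 \<le> n"
      have "Fs n (R K (fst a)) (R K (fst c)) = Fs n (R K (fst a)) (R K (fst b)) + Fs n (R K (fst b)) (R K (fst c))"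
        by (simp add: Fs_def)
      moreover have "snd c - snd a = (snd b - snd a) + (snd c - snd b)" by simp
      ultimately have "\<bar>Fs n (R K (fst a)) (R K (fst c)) - (snd c - snd a)\<bar> \<le>
          \<bar>Fs n (R K (fst a)) (R K (fst b)) - (snd b - snd a)\<bar> + \<bar>Fs n (R K (fst b)) (R K (fst c)) - (snd c - snd b)\<bar>"
        by (simp only: abs_diff_triangle_ineq)
      then show "\<bar>Fs n (R K (fst a)) (R K (fst c)) - (snd c - snd a)\<bar> \<le> \<epsilon>"
        using N1[rule_format, of n] N2[rule_format, of n] n by linarith
    qed
  qed
qed

lemma Inv_Ws:
  assumes aS: "fst a \<in> S" and b: "b \<in> Ws S f a" shows "fst b \<in> S \<and> Inv a b"
proof -
  obtain y r y' s where ab: "a = (y, r)" "b = (y', s)" by (cases a, cases b) auto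
  have y: "y \<in> S" using aS ab by auto
  have y': "y' \<in> S" and ag: "\<exists>N. \<forall>i\<ge>N. y' i = y i"
    and lim: "(\<lambda>n. Fs n y y') \<longlonglongrightarrow> s - r"
    using b ab unfolding Ws_def Fs_def by auto
  obtain N where N: "\<forall>i\<ge>N. y' i = y i" using ag by auto
  define N0 where "N0 = nat (max N 0)"
  have ag0: "\<forall>i\<ge>int N0. y i = y' i" using N by (auto simp: N0_def)
  have "Inv a b" unfolding Inv_def ab fst_conv snd_conv
  proof (intro allI impI)
    fix \<epsilon> :: real assume e: "\<epsilon> > 0"
    then have e2: "\<epsilon>/2 > 0" by simp
    obtain K1 where K1: "\<forall>K\<ge>K1. \<forall>a b a' b'. a \<in> S \<longrightarrow> b \<in> S \<longrightarrow> a' \<in> S \<longrightarrow> b' \<in> S \<longrightarrow>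
      (\<forall>i. \<bar>i\<bar> \<le> int K \<longrightarrow> a' i = a i) \<longrightarrow> (\<forall>i. \<bar>i\<bar> \<le> int K \<longrightarrow> b' i = b i) \<longrightarrow>
      (\<forall>i. int N0 \<le> i \<longrightarrow> a i = b i) \<longrightarrow> (\<forall>i. int N0 \<le> i \<longrightarrow> a' i = b' i) \<longrightarrow>
      (\<forall>n. \<bar>Fs n a' b' - Fs n a b\<bar> \<le> \<epsilon>/2)"
      using fut_est[OF e2, of N0] by blast
    show "\<exists>K0. \<forall>K\<ge>K0. \<exists>N0. \<forall>n\<ge>N0. \<bar>Fs n (R K y) (R K y') - (s - r)\<bar> \<le> \<epsilon>"
    proof (rule exI[of _ "max K1 N0"], intro allI impI)
      fix K assume K: "max K1 N0 \<le> K"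
      have RR: "\<forall>i\<ge>int N0. R K y i = R K y' i" using R_fut[OF y y' ag0] K by auto
      have est: "\<bar>Fs n (R K y) (R K y') - Fs n y y'\<bar> \<le> \<epsilon>/2" for n
        using K1[rule_format, of K y y' "R K y" "R K y'"] K y y' R_S R_mid ag0 RR by auto
      obtain N1 where N1: "\<forall>n\<ge>N1. norm (Fs n y y' - (s - r)) < \<epsilon>/2"
        using LIMSEQ_D[OF lim e2] by blast
      show "\<exists>N0. \<forall>n\<ge>N0. \<bar>Fs n (R K y) (R K y') - (s - r)\<bar> \<le> \<epsilon>"
      proof (rule exI[of _ N1], intro allI impI)
        fix n assume "N1 \<le> n"
        then have "\<bar>Fs n y y' - (s - r)\<bar> < \<epsilon>/2" using N1 by auto
        then show "\<bar>Fs n (R K y) (R K y') - (s - r)\<bar> \<le> \<epsilon>"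
          using est[of n] tri[of "Fs n (R K y) (R K y')" "s - r" "Fs n y y'"] by linarith
      qed
    qed
  qed
  then show ?thesis using y' ab by auto
qed

lemma Inv_Wu:
  assumes aS: "fst a \<in> S" and b: "b \<in> Wu S f a" shows "fst b \<in> S \<and> Inv a b"
proof -
  obtain y r y' s where ab: "a = (y, r)" "b = (y', s)" by (cases a, cases b) auto
  have y: "y \<in> S" using aS ab by auto
  have y': "y' \<in> S" and ag: "\<exists>N. \<forall>i\<le>N. y' i = y i"
    and lim: "(\<lambda>n. Pu n y y') \<longlonglongrightarrow> s - r"
    using b ab unfolding Wu_def Pu_def by auto
  obtain N where N: "\<forall>i\<le>N. y' i = y i" using ag by auto
  define N0 where "N0 = nat (max (- N) 0)"
  have ag0: "\<forall>i\<le>- int N0. y i = y' i" using N by (auto simp: N0_def)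
  have "Inv a b" unfolding Inv_def ab fst_conv snd_conv
  proof (intro allI impI)
    fix \<epsilon> :: real assume e: "\<epsilon> > 0"
    then have e3: "\<epsilon>/3 > 0" by simp
    obtain K1 where K1: "\<forall>K\<ge>K1. \<forall>a b a' b'. a \<in> S \<longrightarrow> b \<in> S \<longrightarrow> a' \<in> S \<longrightarrow> b' \<in> S \<longrightarrow>
      (\<forall>i. \<bar>i\<bar> \<le> int K \<longrightarrow> a' i = a i) \<longrightarrow> (\<forall>i. \<bar>i\<bar> \<le> int K \<longrightarrow> b' i = b i) \<longrightarrow>
      (\<forall>i. i \<le> - int N0 \<longrightarrow> a i = b i) \<longrightarrow> (\<forall>i. i \<le> - int N0 \<longrightarrow> a' i = b' i) \<longrightarrow>
      (\<forall>n. \<bar>Pu n a' b' - Pu n a b\<bar> \<le> \<epsilon>/3)"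
      using past_est[OF e3, of N0] by blast
    show "\<exists>K0. \<forall>K\<ge>K0. \<exists>N0. \<forall>n\<ge>N0. \<bar>Fs n (R K y) (R K y') - (s - r)\<bar> \<le> \<epsilon>"
    proof (rule exI[of _ "max K1 N0"], intro allI impI)
      fix K assume K: "max K1 N0 \<le> K"
      have RR: "\<forall>i\<le>- int N0. R K y i = R K y' i" using R_past[OF y y' ag0] K by auto
      have est: "\<bar>Pu n (R K y) (R K y') - Pu n y y'\<bar> \<le> \<epsilon>/3" for n
        using K1[rule_format, of K y y' "R K y" "R K y'"] K y y' R_S R_mid ag0 RR by auto
      have hz: "(\<lambda>n. Gd n (R K y) (R K y')) \<longlonglongrightarrow> 0"
      proof (rule hom_zero[of _ _ "K + M"])
        show "R K y \<in> S" "R K y' \<in> S" using R_S y y' by auto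
        show "\<forall>i. int (K + M) < \<bar>i\<bar> \<longrightarrow> R K y i = R K y' i" using R_out by auto
      qed
      obtain N1 where N1: "\<forall>n\<ge>N1. norm (Pu n y y' - (s - r)) < \<epsilon>/3"
        using LIMSEQ_D[OF lim e3] by blast
      obtain N2 where N2: "\<forall>n\<ge>N2. norm (Gd n (R K y) (R K y') - 0) < \<epsilon>/3"
        using LIMSEQ_D[OF hz e3] by blast
      show "\<exists>N0. \<forall>n\<ge>N0. \<bar>Fs n (R K y) (R K y') - (s - r)\<bar> \<le> \<epsilon>"
      proof (rule exI[of _ "max N1 N2"], intro allI impI)
        fix n assume "max N1 N2 \<le> n"
        then have 1: "\<bar>Pu n y y' - (s - r)\<bar> < \<epsilon>/3" and 2: "\<bar>Gd n (R K y) (R K y')\<bar> < \<epsilon>/3"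
          using N1 N2 by auto
        have "Fs n (R K y) (R K y') = Pu n (R K y) (R K y') + Gd n (R K y) (R K y')"
          using Fs_Pu_Gd[of n "R K y" "R K y'"] by linarith
        then have "\<bar>Fs n (R K y) (R K y') - (s - r)\<bar> = \<bar>(Pu n (R K y) (R K y') - Pu n y y') + (Pu n y y' - (s - r)) + Gd n (R K y) (R K y')\<bar>"
          by simp
        also have "\<dots> \<le> \<bar>(Pu n (R K y) (R K y') - Pu n y y') + (Pu n y y' - (s - r))\<bar> + \<bar>Gd n (R K y) (R K y')\<bar>"
          by (rule abs_triangle_ineq)
        also have "\<bar>(Pu n (R K y) (R K y') - Pu n y y') + (Pu n y y' - (s - r))\<bar> \<le> \<bar>Pu n (R K y) (R K y') - Pu n y y'\<bar> + \<bar>Pu n y y' - (s - r)\<bar>"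
          by (rule abs_triangle_ineq)
        finally show "\<bar>Fs n (R K y) (R K y') - (s - r)\<bar> \<le> \<epsilon>"
          using 1 2 est[of n] by linarith
      qed
    qed
  qed
  then show ?thesis using y' ab by auto
qed

lemma chain:
  assumes "(\<lambda>a b. b \<in> Ws S f a \<union> Wu S f a)\<^sup>*\<^sup>* a b" and "fst a \<in> S"
  shows "fst b \<in> S \<and> Inv a b"
  using assms(1)
proof (induction rule: rtranclp_induct)
  case base
  then show ?case using assms(2) Inv_refl by auto
next
  case (step y z)
  then have yS: "fst y \<in> S" and Iy: "Inv a y" by auto
  from step(2) have "z \<in> Ws S f y \<or> z \<in> Wu S f y" by simp
  then have "fst z \<in> S \<and> Inv y z" using Inv_Ws[OF yS, of z] Inv_Wu[OF yS, of z] by blast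
  then show ?case using Inv_trans[OF Iy] by auto
qed

lemma no_access: "\<not> accessible S f"
proof
  assume acc: "accessible S f"
  have "(\<lambda>a b. b \<in> Ws S f a \<union> Wu S f a)\<^sup>*\<^sup>* (p, 0) (p, 1)"
    using acc pS unfolding accessible_def by auto
  then have "Inv (p, 0) (p, 1)" using chain pS by auto
  then obtain K0 where "\<forall>K\<ge>K0. \<exists>N0. \<forall>n\<ge>N0. \<bar>Fs n (R K p) (R K p) - 1\<bar> \<le> 1/2"
    unfolding Inv_def by (metis fst_conv snd_conv diff_zero field_sum_of_halves half_gt_zero_iff zero_less_one)
  then obtain N0 where "\<forall>n\<ge>N0. \<bar>Fs n (R K0 p) (R K0 p) - 1\<bar> \<le> 1/2" by auto
  then have "\<bar>Fs N0 (R K0 p) (R K0 p) - 1\<bar> \<le> 1/2" by auto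
  then show False by (simp add: Fs_def)
qed

end

theorem lemma3p1_aux:
  fixes k :: nat and A :: "nat \<Rightarrow> nat \<Rightarrow> bool" and \<mu> :: "seq measure"
    and \<theta> :: real and f :: "seq \<Rightarrow> real"
  assumes "topologically_mixing (SFT k A)"
    and "gibbs_measure (SFT k A) \<mu>"
    and "0 < \<theta>" and "\<theta> < 1"
    and "lipschitz_dtheta (SFT k A) \<theta> f"
    and "integral\<^sup>L \<mu> f = 0"
    and "accessible (SFT k A) f"
  shows "\<not> (\<exists>w. w \<in> borel_measurable \<mu> \<and> (AE x in \<mu>. f x = w (shift x) - w x))"
proof
  assume "\<exists>w. w \<in> borel_measurable \<mu> \<and> (AE x in \<mu>. f x = w (shift x) - w x)"
  then obtain w where w: "w \<in> borel_measurable \<mu>" "AE x in \<mu>. f x = w (shift x) - w x" by blast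
  interpret cob k A \<mu> \<theta> f w
    by unfold_locales (use assms w in auto)
  obtain M where M: "M \<ge> 1" "\<forall>x\<in>S. \<forall>y\<in>S. \<exists>z\<in>S. z 0 = x 0 \<and> z (int M) = y 0"
    using conn_exists by blast
  obtain p where p: "p \<in> S" using S_nonempty by auto
  interpret regz k A \<mu> \<theta> f w p M
    by unfold_locales (use p M in auto)
  show False using no_access assms(7) by simp
qed

theorem lemma3p1:
  fixes k :: nat and A :: "nat \<Rightarrow> nat \<Rightarrow> bool" and \<mu> :: "seq measure"
    and \<theta> :: real and f :: "seq \<Rightarrow> real"
  assumes "topologically_mixing (SFT k A)"
    and "gibbs_measure (SFT k A) \<mu>"
    and "0 < \<theta>" and "\<theta> < 1"
    and "lipschitz_dtheta (SFT k A) \<theta> f"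
    and "integral\<^sup>L \<mu> f = 0"
    and "accessible (SFT k A) f"
  shows "\<not> (\<exists>w. w \<in> borel_measurable \<mu> \<and> (AE x in \<mu>. f x = w (shift x) - w x))"
  using lemma3p1_aux[OF assms] .

end
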